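(* Let $\Omega\subset\mathbb{R}^d$ ($d=2,3$) be a rectangular box with periodic boundary conditions, let $\nu>0$ and $\gamma>0$, and let $\bm F\in L^\infty(0,\infty;\bm H)$. Let $0=t_0<t_1<t_2<\cdots$ be an arbitrary sequence of time nodes with step sizes $\tau_k=t_k-t_{k-1}>0$ (no restriction on the step sizes or their ratios). Assume $(\bm u^i,r^i)\in\big((\dot H^\alpha_{\mathrm{per}}(\Omega))^d\cap\bm H\big)\times\mathbb{R}$ for $i=0,1$ with $\alpha\ge \tfrac34$, and let $(\bm u^{n},r^{n})_{n\ge 0}$ be generated by the ETD-mr-SAV-MS2o scheme: for every $n\ge1$, $$\bm u^{n+1}=\varphi_0(\tau_{n+1}\nu\mathcal L)\bm u^n-\tau_{n+1}\big(1-(r^{n+1})^2\big)\varphi_1(\tau_{n+1}\nu\mathcal L)B(\tilde{\bm u}^{n+\frac12},\tilde{\bm u}^{n+\frac12})+\tau_{n+1}\varphi_1(\tau_{n+1}\nu\mathcal L)\bm F^{n+\frac12},$$ $$r^{n+1}=\varphi_0(\tau_{n+1}\gamma)r^n+\tau_{n+1}(1-r^{n+1})\big\langle\varphi_1(\tau_{n+1}\nu\mathcal L)B(\tilde{\bm u}^{n+\frac12},\tilde{\bm u}^{n+\frac12}),\bm u^{n+1}\big\rangle,$$ where $\tilde{\bm u}^{n+\frac12}=\frac{\tau_{n+1}+2\tau_n}{2\tau_n}\bm u^n-\frac{\tau_{n+1}}{2\tau_n}\bm u^{n-1}$ and $\bm F^{n+\frac12}=\bm F(t_n+\tfrac12\tau_{n+1})$.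 Set $\theta:=\min\{\nu\lambda_1,\gamma\}>0$. Then for all $n\ge1$, $$\|\bm u^{n+1}\|^2+|r^{n+1}+1|^2\le e^{-\theta\sum_{i=1}^n\tau_{i+1}}\big(\|\bm u^1\|^2+|r^1+1|^2\big)+\frac1\theta\Big(\frac{1}{\nu\lambda_1}\|\bm F\|^2_{L^\infty(0,\infty;\bm H)}+\gamma\Big).$$
   Context: $\|\cdot\|$ denotes the $L^2(\Omega)$ norm and $\langle\cdot,\cdot\rangle$ the $L^2$ inner product (extended to the duality pairing between $\dot H^1_{\mathrm{per}}$ and $H^{-1}_{\mathrm{per}}$). $(\dot H^k_{\mathrm{per}}(\Omega))^d$ is the closure in $(H^k(\Omega))^d$ of the $d$-dimensional zero-mean trigonometric polynomials; $\bm H=\{\bm u\in(\dot H^0_{\mathrm{per}}(\Omega))^d:\nabla\cdot\bm u=0\}$ and $\bm V=\{\bm u\in(\dot H^1_{\mathrm{per}}(\Omega))^d:\nabla\cdot\bm u=0\}$. $\mathcal P$ is the Leray–Hopf orthogonal projection of zero-mean $L^2$ vector fields onto $\bm H$; $\mathcal L=-\mathcal P\Delta$ is the Stokes operator, with smallest eigenvalue $\lambda_1>0$; $B(\bm u,\bm v)=\mathcal P(\bm u\cdot\nabla\bm v)$. The scalar functions are $\varphi_0(z)=e^{-z}$ and $\varphi_1(z)=(1-e^{-z})/z$ (with $\varphi_1(0)=1$); $\varphi_j(\tau\nu\mathcal L)$ is defined spectrally, i.e. acting on each divergence-free Fourier mode $\hat{\bm h}_{\bm k}e^{i\bm k\cdot\bm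 x}$ ($\bm k\ne0$) by multiplication with $\varphi_j(\tau\nu\lambda_{\bm k})$, where $\lambda_{\bm k}$ is the corresponding Stokes eigenvalue. *)

theory Defs
  imports "HOL-Analysis.Analysis"
begin

text \<open>Fourier representation on the periodic box \<Omega> = prod_j [0, L_j].
  A (real) vector field on \<Omega> is represented by its Fourier coefficients
  u :: int^'d \<Rightarrow> complex^'d, i.e. u(x) = sum_m u(m) exp(i k_m . x),
  with wave vector k_m = (2 pi m_j / L_j)_j.\<close>

type_synonym 'd field = "int^'d \<Rightarrow> complex^'d"

definition kvec :: "real^'d \<Rightarrow> int^'d \<Rightarrow> real^'d" where
  "kvec L m = (\<chi> j. 2 * pi * of_int (m $ j) / L $ j)"

definition stokes_eig :: "real^'d \<Rightarrow> int^'d \<Rightarrow> real" where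
  "stokes_eig L m = (norm (kvec L m))\<^sup>2"

definition lambda1 :: "real^'d \<Rightarrow> real" where
  "lambda1 L = Inf (stokes_eig L ` (UNIV - {0}))"

definition vol :: "real^'d \<Rightarrow> real" where
  "vol L = (\<Prod>j\<in>UNIV. L $ j)"

text \<open>Membership in H: zero mean, divergence free, real valued, square integrable.\<close>
definition in_H :: "real^'d \<Rightarrow> 'd field \<Rightarrow> bool" where
  "in_H L u \<longleftrightarrow> u 0 = 0
     \<and> (\<forall>m. (\<Sum>j\<in>UNIV. complex_of_real (kvec L m $ j) * u m $ j) = 0)
     \<and> (\<forall>m. u (- m) = (\<chi> j. cnj (u m $ j)))
     \<and> (\<lambda>m. (norm (u m))\<^sup>2) summable_on UNIV"

definition in_Hdot :: "real \<Rightarrow> real^'d \<Rightarrow> 'd field \<Rightarrow> bool" where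
  "in_Hdot \<alpha> L u \<longleftrightarrow> u 0 = 0
     \<and> (\<lambda>m. stokes_eig L m powr \<alpha> * (norm (u m))\<^sup>2) summable_on UNIV"

definition l2norm_sq :: "real^'d \<Rightarrow> 'd field \<Rightarrow> real" where
  "l2norm_sq L u = vol L * (\<Sum>\<^sub>\<infinity>m. (norm (u m))\<^sup>2)"

definition l2inner :: "real^'d \<Rightarrow> 'd field \<Rightarrow> 'd field \<Rightarrow> real" where
  "l2inner L f v = Re (complex_of_real (vol L) *
      (\<Sum>\<^sub>\<infinity>m. (\<Sum>j\<in>UNIV. f m $ j * cnj (v m $ j))))"

definition phi0 :: "real \<Rightarrow> real" where
  "phi0 z = exp (- z)"

definition phi1 :: "real \<Rightarrow> real" where
  "phi1 z = (if z = 0 then 1 else (1 - exp (- z)) / z)"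

definition specop :: "real^'d \<Rightarrow> (real \<Rightarrow> real) \<Rightarrow> 'd field \<Rightarrow> 'd field" where
  "specop L f u = (\<lambda>m. f (stokes_eig L m) *\<^sub>R u m)"

definition leray :: "real^'d \<Rightarrow> 'd field \<Rightarrow> 'd field" where
  "leray L w = (\<lambda>m. if m = 0 then 0 else
      w m - ((\<Sum>j\<in>UNIV. complex_of_real (kvec L m $ j) * w m $ j)
              / complex_of_real (stokes_eig L m))
            *s (\<chi> j. complex_of_real (kvec L m $ j)))"

text \<open>Fourier coefficients of (u . grad) v.\<close>
definition convec :: "real^'d \<Rightarrow> 'd field \<Rightarrow> 'd field \<Rightarrow> 'd field" where
  "convec L u v = (\<lambda>m. \<Sum>\<^sub>\<infinity>p.
      (\<Sum>j\<in>UNIV. u p $ j * (\<i> * complex_of_real (kvec L (m - p) $ j))) *s v (m - p))"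

definition Bop :: "real^'d \<Rightarrow> 'd field \<Rightarrow> 'd field \<Rightarrow> 'd field" where
  "Bop L u v = leray L (convec L u v)"

text \<open>Norm in L^infinity(0,infinity;H) (supremum, F is evaluated pointwise).\<close>
definition Linf_norm :: "real^'d \<Rightarrow> (real \<Rightarrow> 'd field) \<Rightarrow> real" where
  "Linf_norm L F = (SUP s\<in>{0..}. sqrt (l2norm_sq L (F s)))"

end

theory Submission
  imports Defs
begin

definition Kn :: "real^'d::finite \<Rightarrow> int^'d \<Rightarrow> real" where
  "Kn L m = norm (kvec L m)"

lemma kvec_diff: "kvec L (m - p) = kvec L m - kvec L p"
  by (simp add: vec_eq_iff kvec_def diff_divide_distrib algebra_simps)

lemma kvec_0[simp]: "kvec L 0 = 0" by (simp add: vec_eq_iff kvec_def)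

lemma Kn_nonneg[simp]: "Kn L m \<ge> 0" by (simp add: Kn_def)
lemma Kn_0[simp]: "Kn L 0 = 0" by (simp add: Kn_def)

lemma Kn_triangle: "Kn L q \<le> Kn L m + Kn L (m - q)"
proof -
  have "kvec L q = kvec L m - kvec L (m - q)" by (simp add: kvec_diff)
  then show ?thesis unfolding Kn_def by (metis norm_triangle_ineq4)
qed

lemma stokes_Kn: "stokes_eig L m = (Kn L m)^2"
  by (simp add: stokes_eig_def Kn_def)

definition kap0 :: "real^'d::finite \<Rightarrow> real" where
  "kap0 L = Min (range (\<lambda>j. 2*pi / L$j))"

lemma kap0_pos: "\<forall>j. L$j > 0 \<Longrightarrow> kap0 L > 0"
  unfolding kap0_def by (subst Min_gr_iff) auto

lemma kap0_le: "kap0 L \<le> 2*pi / L$j"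
  unfolding kap0_def by (rule Min_le) auto

lemma Kn_sq_eq: "(Kn L m)^2 = (\<Sum>j\<in>UNIV. (2*pi/L$j)^2 * (real_of_int (m$j))^2)"
  unfolding Kn_def power2_norm_eq_inner inner_vec_def
  by (simp add: kvec_def power2_eq_square algebra_simps)

lemma Kn_sq_ge:
  assumes box: "\<forall>j. L$j > 0"
  shows "(Kn L m)^2 \<ge> (kap0 L)^2 * (\<Sum>j\<in>UNIV. (real_of_int (m$j))^2)"
proof -
  have "(kap0 L)^2 * (\<Sum>j\<in>UNIV. (real_of_int (m$j))^2) = (\<Sum>j\<in>UNIV. (kap0 L)^2 * (real_of_int (m$j))^2)"
    by (simp add: sum_distrib_left)
  also have "\<dots> \<le> (\<Sum>j\<in>UNIV. (2*pi/L$j)^2 * (real_of_int (m$j))^2)"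
  proof (rule sum_mono)
    fix j
    have "kap0 L \<le> 2*pi/L$j" by (rule kap0_le)
    moreover have "0 \<le> kap0 L" using kap0_pos[OF box] by simp
    ultimately have "(kap0 L)^2 \<le> (2*pi/L$j)^2" by (simp add: power_mono)
    then show "(kap0 L)^2 * (real_of_int (m$j))^2 \<le> (2*pi/L$j)^2 * (real_of_int (m$j))^2"
      by (simp add: mult_right_mono)
  qed
  finally show ?thesis by (simp add: Kn_sq_eq)
qed

lemma sumsq_ge1:
  fixes m :: "int^'d::finite"
  assumes "m \<noteq> 0"
  shows "(\<Sum>j\<in>UNIV. (real_of_int (m$j))^2) \<ge> 1"
proof -
  obtain j where j: "m$j \<noteq> 0" using assms by (auto simp: vec_eq_iff)
  then have "1 \<le> \<bar>real_of_int (m$j)\<bar>" by linarith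
  then have "1 \<le> \<bar>real_of_int (m$j)\<bar>^2" by (rule one_le_power)
  then have "(real_of_int (m$j))^2 \<ge> 1" by simp
  also have "\<dots> \<le> (\<Sum>j\<in>UNIV. (real_of_int (m$j))^2)"
    by (rule member_le_sum) auto
  finally show ?thesis .
qed

lemma Kn_ge:
  assumes box: "\<forall>j. L$j > 0" and m: "m \<noteq> 0"
  shows "Kn L m \<ge> kap0 L"
proof -
  have "(kap0 L)^2 \<le> (kap0 L)^2 * (\<Sum>j\<in>UNIV. (real_of_int (m$j))^2)"
    using sumsq_ge1[OF m] by (simp add: mult_le_cancel_left1)
  also have "\<dots> \<le> (Kn L m)^2" by (rule Kn_sq_ge[OF box])
  finally show ?thesis by (rule power2_le_imp_le) simp
qed

lemma Kn_pos: "\<forall>j. L$j > 0 \<Longrightarrow> m \<noteq> 0 \<Longrightarrow> Kn L m > 0"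
  using Kn_ge kap0_pos by (metis order_less_le_trans)

lemma sq_powr:
  fixes x :: real assumes "0 \<le> x" shows "(x^2) powr a = x powr (2*a)"
proof -
  have "x^2 = x powr 2" using assms by simp
  then show ?thesis by (metis powr_powr)
qed

lemma nat_powr_summable:
  assumes e: "e > 1/2"
  shows "(\<lambda>n::nat. (1 + (real n)^2) powr (-e)) summable_on UNIV"
proof -
  have s1: "summable (\<lambda>n::nat. real n powr (-2*e))"
    using e by (subst summable_real_powr_iff) simp
  have s2: "summable (\<lambda>n::nat. 2 powr e * real (Suc n) powr (-2*e))"
    using s1 by (subst summable_Suc_iff) (rule summable_mult)
  have le: "(1 + (real n)^2) powr (-e) \<le> 2 powr e * real (Suc n) powr (-2*e)" for n
  proof -
    have q1: "(real (Suc n))^2 = (real n)^2 + 2*real n + 1" by (simp add: power2_eq_square algebra_simps)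
    have q2: "(real n - 1)^2 = (real n)^2 - 2*real n + 1" by (simp add: power2_eq_square algebra_simps)
    have "0 \<le> (real n - 1)^2" by simp
    then have "(real (Suc n))^2 / 2 \<le> 1 + (real n)^2" using q1 q2 by linarith
    moreover have "0 < (real (Suc n))^2 / 2" by simp
    ultimately have "(1 + (real n)^2) powr (-e) \<le> ((real (Suc n))^2 / 2) powr (-e)"
      using e by (intro powr_mono2') auto
    also have "\<dots> = 2 powr e * real (Suc n) powr (-2*e)"
    proof -
      have "((real (Suc n))^2 / 2) powr (-e) = ((real (Suc n))^2) powr (-e) / 2 powr (-e)"
        by (simp add: powr_divide)
      also have "((real (Suc n))^2) powr (-e) = real (Suc n) powr (-2*e)"
        using sq_powr[of "real (Suc n)" "-e"] by simp
      finally show ?thesis by (simp add: powr_minus divide_simps)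
    qed
    finally show ?thesis .
  qed
  have "summable (\<lambda>n::nat. (1 + (real n)^2) powr (-e))"
    by (rule summable_comparison_test[OF _ s2]) (use le in auto)
  then show ?thesis
    by (rule summable_nonneg_imp_summable_on) simp
qed

lemma int_powr_summable:
  assumes e: "e > 1/2"
  shows "(\<lambda>n::int. (1 + (real_of_int n)^2) powr (-e)) summable_on UNIV"
proof -
  define h where "h = (\<lambda>n::int. (1 + (real_of_int n)^2) powr (-e))"
  have "(h \<circ> int) summable_on UNIV" using nat_powr_summable[OF e] by (simp add: h_def o_def)
  then have A: "h summable_on range int" by (subst summable_on_reindex) auto
  have "(h \<circ> (\<lambda>n. - int n)) summable_on UNIV" using nat_powr_summable[OF e] by (simp add: h_def o_def)
  then have B: "h summable_on range (\<lambda>n. - int n)" by (subst summable_on_reindex) (auto simp: inj_on_def)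
  have "x \<in> range int \<union> range (\<lambda>n. - int n)" for x :: int
  proof (cases "x \<ge> 0")
    case True then have "x = int (nat x)" by simp then show ?thesis by blast
  next
    case False then have "x = - int (nat (-x))" by simp then show ?thesis by blast
  qed
  then have U: "range int \<union> range (\<lambda>n. - int n) = (UNIV::int set)" by blast
  have "h summable_on (range int \<union> range (\<lambda>n. - int n))"
    by (rule summable_on_union[OF A B])
  then show ?thesis unfolding U h_def .
qed

lemma prod_summable:
  fixes h :: "int \<Rightarrow> real"
  assumes hs: "h summable_on UNIV" and hn: "\<And>n. h n \<ge> 0"
  shows "(\<lambda>m::int^'d::finite. \<Prod>j\<in>UNIV. h (m$j)) summable_on UNIV"
proof (rule nonneg_bdd_above_summable_on)
  show "\<And>x. x \<in> UNIV \<Longrightarrow> 0 \<le> (\<Prod>j\<in>UNIV. h (x$j))" by (simp add: hn prod_nonneg)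
  show "bdd_above (sum (\<lambda>m::int^'d. \<Prod>j\<in>UNIV. h (m$j)) ` {F. F \<subseteq> UNIV \<and> finite F})"
  proof (rule bdd_aboveI2)
    fix M :: "(int^'d) set" assume "M \<in> {F. F \<subseteq> UNIV \<and> finite F}"
    then have fM: "finite M" by simp
    define P where "P = (\<lambda>j. (\<lambda>m. m$j) ` M)"
    have fP: "finite (P j)" for j using fM by (simp add: P_def)
    have "(\<Sum>m\<in>M. \<Prod>j\<in>UNIV. h (m$j)) = (\<Sum>g\<in>vec_nth ` M. \<Prod>j\<in>UNIV. h (g j))"
      by (subst sum.reindex) (auto simp: inj_on_def vec_nth_inject)
    also have "\<dots> \<le> (\<Sum>g\<in>PiE UNIV P. \<Prod>j\<in>UNIV. h (g j))"
      by (rule sum_mono2) (auto simp: P_def fM finite_PiE prod_nonneg hn intro!: finite_PiE)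
    also have "\<dots> = (\<Prod>j\<in>UNIV. \<Sum>n\<in>P j. h n)"
      by (rule prod_sum_PiE[symmetric]) (auto simp: fP)
    also have "\<dots> \<le> (\<Prod>j\<in>(UNIV::'d set). infsum h UNIV)"
      by (rule prod_mono) (auto simp: sum_nonneg hn fP intro!: finite_sum_le_infsum hs)
    finally show "(\<Sum>m\<in>M. \<Prod>j\<in>UNIV. h (m$j)) \<le> (\<Prod>j\<in>(UNIV::'d set). infsum h UNIV)" .
  qed
qed


lemma lattice_summable:
  fixes L :: "real^'d::finite"
  assumes box: "\<forall>j. L$j > 0" and d: "CARD('d) \<le> 3"
  shows "(\<lambda>m. Kn L m powr (-7/2)) summable_on UNIV"
proof -
  define c where "c = real CARD('d)"
  have c1: "c \<ge> 1" unfolding c_def by (simp add: Suc_leI)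
  have c3: "c \<le> 3" unfolding c_def using d by simp
  define e where "e = 7 / (4 * c)"
  have e: "e > 1/2" unfolding e_def using c1 c3 by (simp add: field_simps)
  define h where "h = (\<lambda>n::int. (1 + (real_of_int n)^2) powr (-e))"
  define C where "C = ((kap0 L)^2 / 2) powr (-7/4)"
  have C0: "C \<ge> 0" by (simp add: C_def)
  have hs: "h summable_on UNIV" unfolding h_def by (rule int_powr_summable[OF e])
  have hn: "\<And>n. h n \<ge> 0" by (simp add: h_def)
  have ps: "(\<lambda>m::int^'d. C * (\<Prod>j\<in>UNIV. h (m$j))) summable_on UNIV"
    by (intro summable_on_cmult_right prod_summable hs hn)
  show ?thesis
  proof (rule summable_on_comparison_test[OF ps])
    fix m :: "int^'d"
    show "0 \<le> Kn L m powr (-7/2)" by simp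
    show "Kn L m powr (-7/2) \<le> C * (\<Prod>j\<in>UNIV. h (m$j))"
    proof (cases "m = 0")
      case True then show ?thesis by (simp add: C0 prod_nonneg hn)
    next
      case False
      define N where "N = (\<Sum>j\<in>UNIV. (real_of_int (m$j))^2)"
      have N1: "N \<ge> 1" unfolding N_def by (rule sumsq_ge1[OF False])
      have k0: "kap0 L > 0" by (rule kap0_pos[OF box])
      have KN: "(Kn L m)^2 \<ge> (kap0 L)^2 * N" unfolding N_def by (rule Kn_sq_ge[OF box])
      have "Kn L m powr (-7/2) = ((Kn L m)^2) powr (-7/4)"
        using sq_powr[of "Kn L m" "-7/4"] by simp
      also have "\<dots> \<le> ((kap0 L)^2 / 2 * (1 + N)) powr (-7/4)"
      proof (rule powr_mono2')
        show "0 < (kap0 L)^2 / 2 * (1 + N)" using k0 N1 by simp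
        have "(kap0 L)^2 / 2 * (1 + N) \<le> (kap0 L)^2 * N"
          using N1 k0 by (simp add: field_simps mult_left_mono)
        then show "(kap0 L)^2 / 2 * (1 + N) \<le> (Kn L m)^2" using KN by linarith
      qed simp
      also have "\<dots> = C * (1 + N) powr (-7/4)"
        using N1 powr_mult[of "(kap0 L)^2 / 2" "1 + N" "-7/4"] by (simp add: C_def)
      also have "\<dots> \<le> C * (\<Prod>j\<in>UNIV. h (m$j))"
      proof (rule mult_left_mono[OF _ C0])
        have P: "(\<Prod>j\<in>UNIV. h (m$j)) = (\<Prod>j\<in>UNIV. 1 + (real_of_int (m$j))^2) powr (-e)"
          by (simp add: h_def prod_powr_distrib)
        have "(\<Prod>j\<in>UNIV. 1 + (real_of_int (m$j))^2) \<le> (\<Prod>j\<in>(UNIV::'d set). 1 + N)"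
        proof (rule prod_mono)
          fix j :: 'd
          have "(real_of_int (m$j))^2 \<le> N" unfolding N_def by (rule member_le_sum) auto
          then show "0 \<le> 1 + (real_of_int (m$j))^2 \<and> 1 + (real_of_int (m$j))^2 \<le> 1 + N"
            by (simp add: add_nonneg_nonneg)
        qed
        also have "\<dots> = (1 + N) ^ CARD('d)" by simp
        finally have le: "(\<Prod>j\<in>UNIV. 1 + (real_of_int (m$j))^2) \<le> (1 + N) ^ CARD('d)" .
        have pp: "0 < (\<Prod>j\<in>UNIV. 1 + (real_of_int (m$j))^2)"
          by (rule prod_pos) (simp add: add_pos_nonneg)
        have "((1 + N) ^ CARD('d)) powr (-e) \<le> (\<Prod>j\<in>UNIV. 1 + (real_of_int (m$j))^2) powr (-e)"
          using le pp e by (intro powr_mono2') auto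
        moreover have "((1 + N) ^ CARD('d)) powr (-e) = (1 + N) powr (-7/4)"
        proof -
          have "(1 + N) ^ CARD('d) = (1 + N) powr c" using N1 by (simp add: c_def powr_realpow)
          then have "((1 + N) ^ CARD('d)) powr (-e) = (1 + N) powr (c * -e)" by (simp add: powr_powr)
          also have "c * -e = -7/4" using c1 by (simp add: e_def field_simps)
          finally show ?thesis .
        qed
        ultimately show "(1 + N) powr (-7/4) \<le> (\<Prod>j\<in>UNIV. h (m$j))" using P by simp
      qed
      finally show ?thesis .
    qed
  qed
qed

lemma norm_smult_cvec: "norm (c *s (x::complex^'d::finite)) = cmod c * norm x"
  by (simp add: norm_vec_def L2_set_def norm_mult power_mult_distrib sum_distrib_left[symmetric] real_sqrt_mult)

lemma L2_set_abs_eq: "L2_set (\<lambda>i. \<bar>f i\<bar>) A = L2_set f A"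
  by (simp add: L2_set_def)

lemma cs_vec:
  fixes k :: "real^'d::finite" and w :: "complex^'d"
  shows "cmod (\<Sum>j\<in>UNIV. complex_of_real (k$j) * w$j) \<le> norm k * norm w"
proof -
  have "cmod (\<Sum>j\<in>UNIV. complex_of_real (k$j) * w$j) \<le> (\<Sum>j\<in>UNIV. cmod (complex_of_real (k$j) * w$j))"
    by (rule norm_sum)
  also have "\<dots> = (\<Sum>j\<in>UNIV. \<bar>k$j\<bar> * \<bar>norm (w$j)\<bar>)" by (simp add: norm_mult)
  also have "\<dots> \<le> L2_set (\<lambda>j. k$j) UNIV * L2_set (\<lambda>j. norm (w$j)) UNIV"
    by (rule L2_set_mult_ineq)
  also have "\<dots> = norm k * norm w"
    by (simp add: norm_vec_def L2_set_abs_eq[of "\<lambda>j. k$j"])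
  finally show ?thesis .
qed

lemma norm_kc: "norm (\<chi> j. complex_of_real ((k::real^'d::finite)$j)) = norm k"
  by (simp add: norm_vec_def)

lemma leray_bound:
  assumes box: "\<forall>j. L$j > 0"
  shows "norm (leray L w m) \<le> 2 * norm (w m)"
proof (cases "m = 0")
  case True then show ?thesis by (simp add: leray_def)
next
  case False
  define k where "k = kvec L m"
  define kc where "kc = (\<chi> j. complex_of_real (k$j))"
  define s where "s = (\<Sum>j\<in>UNIV. complex_of_real (k$j) * w m $ j)"
  have Kp: "norm k > 0" using Kn_pos[OF box False] by (simp add: Kn_def k_def)
  have se: "stokes_eig L m = (norm k)^2" by (simp add: stokes_eig_def k_def)
  have le: "leray L w m = w m - (s / complex_of_real ((norm k)^2)) *s kc"
    using False by (simp add: leray_def s_def kc_def k_def se)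
  have "norm (leray L w m) \<le> norm (w m) + norm ((s / complex_of_real ((norm k)^2)) *s kc)"
    unfolding le by (rule norm_triangle_ineq4)
  also have "norm ((s / complex_of_real ((norm k)^2)) *s kc) = cmod s / (norm k)^2 * norm k"
    by (simp add: norm_smult_cvec kc_def norm_kc norm_divide norm_power)
  also have "\<dots> \<le> norm (w m)"
  proof -
    have "cmod s \<le> norm k * norm (w m)" unfolding s_def by (rule cs_vec)
    then have "cmod s / (norm k)^2 * norm k \<le> norm k * norm (w m) / (norm k)^2 * norm k"
      using Kp by (intro mult_right_mono divide_right_mono) auto
    also have "\<dots> = norm (w m)" using Kp by (simp add: power2_eq_square)
    finally show ?thesis .
  qed
  finally show ?thesis by simp
qed

lemma conv_term_bound:
  fixes u v :: "complex^'d::finite" and k :: "real^'d"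
  shows "norm ((\<Sum>j\<in>UNIV. u $ j * (\<i> * complex_of_real (k $ j))) *s v) \<le> norm u * norm k * norm v"
proof -
  have "(\<Sum>j\<in>UNIV. u $ j * (\<i> * complex_of_real (k $ j))) = \<i> * (\<Sum>j\<in>UNIV. complex_of_real (k$j) * u$j)"
    by (simp add: sum_distrib_left algebra_simps)
  then have "cmod (\<Sum>j\<in>UNIV. u $ j * (\<i> * complex_of_real (k $ j))) \<le> norm k * norm u"
    using cs_vec[of k u] by (simp add: norm_mult)
  then show ?thesis
    by (simp add: norm_smult_cvec) (metis mult.commute mult_right_mono norm_ge_zero)
qed

definition Qf :: "real^'d::finite \<Rightarrow> int^'d \<Rightarrow> real" where
  "Qf L m = sqrt (Kn L m)"

lemma Qf_nonneg[simp]: "Qf L m \<ge> 0" by (simp add: Qf_def)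
lemma Qf_0[simp]: "Qf L 0 = 0" by (simp add: Qf_def)
lemma Kn_Qf: "Kn L m = (Qf L m)^2" by (simp add: Qf_def)
lemma stokes_Qf: "stokes_eig L m = (Qf L m)^4"
  by (simp add: stokes_Kn Kn_Qf flip: power_mult)

lemma Qf_ge: "\<forall>j. L$j > 0 \<Longrightarrow> m \<noteq> 0 \<Longrightarrow> Qf L m \<ge> sqrt (kap0 L)"
  unfolding Qf_def using Kn_ge by (simp add: real_sqrt_le_iff)

lemma q0_pos: "\<forall>j. L$j > 0 \<Longrightarrow> sqrt (kap0 L) > 0"
  using kap0_pos by simp

lemma Qf_pos: "\<forall>j. L$j > 0 \<Longrightarrow> m \<noteq> 0 \<Longrightarrow> Qf L m > 0"
  using Qf_ge q0_pos by (metis order_less_le_trans)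

lemma Qf_tri: "Qf L q \<le> Qf L m + Qf L (m - q)"
proof -
  have "Qf L q \<le> sqrt (Kn L m + Kn L (m - q))"
    unfolding Qf_def using Kn_triangle by (simp add: real_sqrt_le_iff)
  also have "\<dots> \<le> Qf L m + Qf L (m - q)" unfolding Qf_def by (rule sqrt_add_le_add_sqrt) auto
  finally show ?thesis .
qed

definition inC :: "real^'d::finite \<Rightarrow> 'd field \<Rightarrow> bool" where
  "inC L w \<longleftrightarrow> w 0 = 0 \<and> (\<lambda>m. (Qf L m)^3 * (norm (w m))^2) summable_on UNIV"

definition l2f :: "'d::finite field \<Rightarrow> bool" where
  "l2f w \<longleftrightarrow> (\<lambda>m. (norm (w m))^2) summable_on UNIV"

lemma inC_l2f:
  assumes box: "\<forall>j. L$j > 0" and w: "inC L w"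
  shows "l2f w"
  unfolding l2f_def
proof (rule summable_on_comparison_test)
  define q where "q = sqrt (kap0 L)"
  have q: "q > 0" using q0_pos[OF box] by (simp add: q_def)
  show "(\<lambda>m. (1 / q^3) * ((Qf L m)^3 * (norm (w m))^2)) summable_on UNIV"
    using w unfolding inC_def by (intro summable_on_cmult_right) auto
  fix m
  show "0 \<le> (norm (w m))^2" by simp
  show "(norm (w m))^2 \<le> (1 / q^3) * ((Qf L m)^3 * (norm (w m))^2)"
  proof (cases "m = 0")
    case True then show ?thesis using w by (simp add: inC_def)
  next
    case False
    have "q^3 \<le> (Qf L m)^3" using Qf_ge[OF box False] q by (simp add: q_def power_mono)
    then have "1 \<le> (Qf L m)^3 / q^3" using q by simp
    then have "1 * (norm (w m))^2 \<le> ((Qf L m)^3 / q^3) * (norm (w m))^2"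
      by (intro mult_right_mono) auto
    then show ?thesis by simp
  qed
qed

lemma inC_mono:
  assumes u: "inC L u" and b: "\<And>m. norm (w m) \<le> C * norm (u m)"
  shows "inC L w"
  unfolding inC_def
proof
  show "w 0 = 0" using b[of 0] u by (simp add: inC_def)
  show "(\<lambda>m. (Qf L m)^3 * (norm (w m))^2) summable_on UNIV"
  proof (rule summable_on_comparison_test)
    show "(\<lambda>m. C^2 * ((Qf L m)^3 * (norm (u m))^2)) summable_on UNIV"
      using u unfolding inC_def by (intro summable_on_cmult_right) auto
    fix m
    show "0 \<le> (Qf L m)^3 * (norm (w m))^2" by simp
    have "C * norm (u m) \<le> \<bar>C\<bar> * norm (u m)" by (rule mult_right_mono) auto
    then have "norm (w m) \<le> \<bar>C\<bar> * norm (u m)" using b[of m] by linarith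
    then have "(norm (w m))^2 \<le> (\<bar>C\<bar> * norm (u m))^2" by (intro power_mono) auto
    also have "\<dots> = C^2 * (norm (u m))^2" by (simp add: power_mult_distrib)
    finally have "(Qf L m)^3 * (norm (w m))^2 \<le> (Qf L m)^3 * (C^2 * (norm (u m))^2)"
      by (intro mult_left_mono) auto
    then show "(Qf L m)^3 * (norm (w m))^2 \<le> C^2 * ((Qf L m)^3 * (norm (u m))^2)"
      by (simp add: mult.left_commute)
  qed
qed

lemma inC_add:
  assumes u: "inC L u" and v: "inC L v"
  shows "inC L (\<lambda>m. u m + v m)"
  unfolding inC_def
proof
  show "u 0 + v 0 = 0" using u v by (simp add: inC_def)
  show "(\<lambda>m. (Qf L m)^3 * (norm (u m + v m))^2) summable_on UNIV"
  proof (rule summable_on_comparison_test)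
    show "(\<lambda>m. 2 * ((Qf L m)^3 * (norm (u m))^2) + 2 * ((Qf L m)^3 * (norm (v m))^2)) summable_on UNIV"
      using u v unfolding inC_def by (intro summable_on_add summable_on_cmult_right) auto
    fix m
    show "0 \<le> (Qf L m)^3 * (norm (u m + v m))^2" by simp
    have "norm (u m + v m) \<le> norm (u m) + norm (v m)" by (rule norm_triangle_ineq)
    then have "(norm (u m + v m))^2 \<le> (norm (u m) + norm (v m))^2" by (intro power_mono) auto
    also have "\<dots> \<le> 2 * (norm (u m))^2 + 2 * (norm (v m))^2"
    proof -
      have "(norm (u m) + norm (v m))^2 = 2 * (norm (u m))^2 + 2 * (norm (v m))^2 - (norm (u m) - norm (v m))^2"
        by (simp add: power2_eq_square algebra_simps)
      moreover have "0 \<le> (norm (u m) - norm (v m))^2" by simp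
      ultimately show ?thesis by linarith
    qed
    finally have "(Qf L m)^3 * (norm (u m + v m))^2 \<le> (Qf L m)^3 * (2 * (norm (u m))^2 + 2 * (norm (v m))^2)"
      by (intro mult_left_mono) auto
    then show "(Qf L m)^3 * (norm (u m + v m))^2 \<le> 2 * ((Qf L m)^3 * (norm (u m))^2) + 2 * ((Qf L m)^3 * (norm (v m))^2)"
      by (simp add: algebra_simps)
  qed
qed

lemma inC_scaleR: "inC L u \<Longrightarrow> inC L (\<lambda>m. c *\<^sub>R u m)"
  by (rule inC_mono[where C="\<bar>c\<bar>"]) auto

lemma inC_diff: "inC L u \<Longrightarrow> inC L v \<Longrightarrow> inC L (\<lambda>m. u m - v m)"
  using inC_add[of L u "\<lambda>m. (-1) *\<^sub>R v m"] inC_scaleR[of L v "-1"] by simp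

lemma cs_infsum:
  fixes f g :: "'a \<Rightarrow> real"
  assumes f0: "\<And>x. f x \<ge> 0" and g0: "\<And>x. g x \<ge> 0"
    and fs: "(\<lambda>x. (f x)^2) summable_on A" and gs: "(\<lambda>x. (g x)^2) summable_on A"
  shows "(\<lambda>x. f x * g x) summable_on A"
    and "(infsum (\<lambda>x. f x * g x) A)^2 \<le> infsum (\<lambda>x. (f x)^2) A * infsum (\<lambda>x. (g x)^2) A"
proof -
  show s: "(\<lambda>x. f x * g x) summable_on A"
  proof (rule summable_on_comparison_test)
    show "(\<lambda>x. (f x)^2 + (g x)^2) summable_on A" using fs gs by (rule summable_on_add)
    fix x
    show "0 \<le> f x * g x" using f0 g0 by simp
    have "0 \<le> (f x - g x)^2" by simp
    moreover have "(f x - g x)^2 = (f x)^2 + (g x)^2 - 2 * (f x * g x)" by (simp add: power2_eq_square algebra_simps)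
    moreover have "0 \<le> f x * g x" using f0[of x] g0[of x] by simp
    ultimately show "f x * g x \<le> (f x)^2 + (g x)^2" by linarith
  qed
  define P where "P = infsum (\<lambda>x. (f x)^2) A"
  define Q where "Q = infsum (\<lambda>x. (g x)^2) A"
  have "infsum (\<lambda>x. f x * g x) A \<le> sqrt (P * Q)"
  proof (rule infsum_le_finite_sums[OF s])
    fix F assume F: "finite F" "F \<subseteq> A"
    have "(\<Sum>x\<in>F. f x * g x)^2 \<le> (\<Sum>x\<in>F. (f x)^2) * (\<Sum>x\<in>F. (g x)^2)"
      by (rule Cauchy_Schwarz_ineq_sum)
    also have "\<dots> \<le> P * Q"
    proof (rule mult_mono)
      show "(\<Sum>x\<in>F. (f x)^2) \<le> P" unfolding P_def by (rule finite_sum_le_infsum[OF fs F]) auto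
      show "(\<Sum>x\<in>F. (g x)^2) \<le> Q" unfolding Q_def by (rule finite_sum_le_infsum[OF gs F]) auto
      show "0 \<le> P" unfolding P_def by (rule infsum_nonneg) auto
      show "0 \<le> (\<Sum>x\<in>F. (g x)^2)" by (rule sum_nonneg) auto
    qed
    finally show "(\<Sum>x\<in>F. f x * g x) \<le> sqrt (P * Q)" by (rule real_le_rsqrt)
  qed
  moreover have "0 \<le> infsum (\<lambda>x. f x * g x) A" by (rule infsum_nonneg) (simp add: f0 g0)
  moreover have "0 \<le> P * Q" unfolding P_def Q_def by (intro mult_nonneg_nonneg infsum_nonneg) auto
  ultimately have "(infsum (\<lambda>x. f x * g x) A)^2 \<le> (sqrt (P * Q))^2" by (intro power_mono) auto
  then show "(infsum (\<lambda>x. f x * g x) A)^2 \<le> P * Q" using \<open>0 \<le> P * Q\<close> by simp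
qed

lemma lattice_Q:
  fixes L :: "real^'d::finite"
  assumes box: "\<forall>j. L$j > 0" and d: "CARD('d) \<le> 3"
  shows "(\<lambda>m. 1 / (Qf L m)^7) summable_on UNIV"
proof -
  have "Kn L m powr (-7/2) = 1 / (Qf L m)^7" for m
  proof (cases "m = 0")
    case True then show ?thesis by simp
  next
    case False
    have "Kn L m powr (-7/2) = ((Qf L m)^2) powr (-7/2)" by (simp add: Kn_Qf)
    also have "\<dots> = Qf L m powr (-7)" using sq_powr[of "Qf L m" "-7/2"] by simp
    also have "\<dots> = 1 / (Qf L m)^7" using Qf_pos[OF box False] by (simp add: powr_minus divide_inverse)
    finally show ?thesis .
  qed
  then show ?thesis using lattice_summable[OF box d] by simp
qed

lemma bij_shift: "bij_betw (\<lambda>p. m - p) UNIV (UNIV :: ('a::ab_group_add) set)"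
  by (rule bij_betwI[where g="\<lambda>p. m - p"]) auto

lemma summable_shift: "f summable_on UNIV \<Longrightarrow> (\<lambda>p. f (m - p)) summable_on (UNIV :: ('a::ab_group_add) set)"
  using summable_on_reindex_bij_betw[OF bij_shift[of m], of f] by simp

lemma infsum_shift: "infsum (\<lambda>p. f (m - p)) (UNIV :: ('a::ab_group_add) set) = infsum f UNIV"
  using infsum_reindex_bij_betw[OF bij_shift[of m], of f] by simp

lemma infsum_finite_sum:
  fixes f :: "'i \<Rightarrow> 'a \<Rightarrow> real"
  assumes "finite M" and "\<And>m. m \<in> M \<Longrightarrow> f m summable_on A"
  shows "(\<lambda>q. \<Sum>m\<in>M. f m q) summable_on A \<and> (\<Sum>m\<in>M. infsum (f m) A) = infsum (\<lambda>q. \<Sum>m\<in>M. f m q) A"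
  using assms
proof (induction M rule: finite_induct)
  case empty then show ?case by simp
next
  case (insert x F)
  then have IH: "(\<lambda>q. \<Sum>m\<in>F. f m q) summable_on A" "(\<Sum>m\<in>F. infsum (f m) A) = infsum (\<lambda>q. \<Sum>m\<in>F. f m q) A"
    by auto
  have fx: "f x summable_on A" using insert by auto
  have "(\<lambda>q. f x q + (\<Sum>m\<in>F. f m q)) summable_on A" by (rule summable_on_add[OF fx IH(1)])
  moreover have "infsum (f x) A + infsum (\<lambda>q. \<Sum>m\<in>F. f m q) A = infsum (\<lambda>q. f x q + (\<Sum>m\<in>F. f m q)) A"
    by (rule infsum_add[OF fx IH(1), symmetric])
  ultimately show ?case using insert IH by simp
qed

lemma phi1_nonneg: "z \<ge> 0 \<Longrightarrow> phi1 z \<ge> 0"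
  by (simp add: phi1_def)

lemma phi1_le_1: assumes "z \<ge> 0" shows "phi1 z \<le> 1"
proof (cases "z = 0")
  case False
  then have "z > 0" using assms by simp
  moreover have "1 - exp (-z) \<le> z" using exp_ge_add_one_self[of "-z"] by simp
  ultimately show ?thesis by (simp add: phi1_def)
qed (simp add: phi1_def)

lemma phi1_le_inv: assumes "z > 0" shows "phi1 z \<le> 1 / z"
proof -
  have "1 - exp (-z) \<le> 1" by simp
  then show ?thesis using assms by (simp add: phi1_def divide_right_mono)
qed

lemma key_scalar:
  fixes x y z :: real
  assumes x: "x > 0" and y: "y > 0" and z: "0 \<le> z" "z \<le> x + y"
  shows "z / (y^3 * x^5) \<le> 2 * (1 / x^7 + 1 / y^7)"
proof (cases "x \<le> y")
  case True
  have "z / (y^3 * x^5) \<le> (2*y) / (y^3 * x^5)"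
    using z True x y by (intro divide_right_mono) auto
  also have "\<dots> = 2 / (y^2 * x^5)" using y by (simp add: power2_eq_square power3_eq_cube)
  also have "\<dots> \<le> 2 / (x^2 * x^5)"
    using True x y by (intro divide_left_mono mult_right_mono power_mono mult_pos_pos) auto
  also have "\<dots> = 2 / x^7" by (simp flip: power_add)
  also have "\<dots> \<le> 2 * (1 / x^7 + 1 / y^7)" using x y by simp
  finally show ?thesis .
next
  case False
  have "z / (y^3 * x^5) \<le> (2*x) / (y^3 * x^5)"
    using z False x y by (intro divide_right_mono) auto
  also have "\<dots> = 2 / (y^3 * x^4)"
  proof -
    have "x^5 = x * x^4" by (simp add: power_Suc[symmetric] del: power_Suc)
    then show ?thesis using x y by simp
  qed
  also have "\<dots> \<le> 2 / (y^3 * y^4)"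
    using False x y by (intro divide_left_mono mult_left_mono power_mono mult_pos_pos) auto
  also have "\<dots> = 2 / y^7" by (simp flip: power_add)
  also have "\<dots> \<le> 2 * (1 / x^7 + 1 / y^7)" using x y by simp
  finally show ?thesis .
qed

lemma scal2:
  fixes a b c q N :: real
  assumes "0 \<le> a" "0 < q" "q \<le> b" "0 \<le> c" "a \<le> c + b" "0 \<le> N"
  shows "N * a^4 / b^3 \<le> (c / q^3 + 1 / q^2) * (a^3 * N)"
proof -
  have b: "b > 0" using assms by linarith
  have "a / b^3 \<le> (c + b) / b^3" using assms b by (intro divide_right_mono) auto
  also have "\<dots> = c / b^3 + 1 / b^2" using b by (simp add: add_divide_distrib power2_eq_square power3_eq_cube)
  also have "\<dots> \<le> c / q^3 + 1 / q^2"
    using assms b by (intro add_mono divide_left_mono power_mono mult_pos_pos) auto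
  finally have "a / b^3 * (a^3 * N) \<le> (c / q^3 + 1 / q^2) * (a^3 * N)"
    using assms by (intro mult_right_mono) auto
  moreover have "a / b^3 * (a^3 * N) = N * a^4 / b^3" by (simp add: eval_nat_numeral)
  ultimately show ?thesis by linarith
qed

context
  fixes L :: "real^'d::finite" and u v :: "'d field"
  assumes box: "\<forall>j. L$j > 0" and dim3: "CARD('d) \<le> 3"
    and u: "inC L u" and v: "inC L v"
begin

lemma B_summable:
  "(\<lambda>p. (norm (v (m-p)))^2 * (Qf L (m-p))^4 / (Qf L p)^3) summable_on UNIV"
proof (rule summable_on_comparison_test)
  define q where "q = sqrt (kap0 L)"
  have q: "q > 0" using q0_pos[OF box] by (simp add: q_def)
  define Cm where "Cm = Qf L m / q^3 + 1 / q^2"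
  have vs: "(\<lambda>x. (Qf L x)^3 * (norm (v x))^2) summable_on UNIV" using v by (simp add: inC_def)
  show "(\<lambda>p. Cm * ((Qf L (m-p))^3 * (norm (v (m-p)))^2)) summable_on UNIV"
    by (intro summable_on_cmult_right) (rule summable_shift[OF vs])
  fix p
  show "0 \<le> (norm (v (m-p)))^2 * (Qf L (m-p))^4 / (Qf L p)^3" by simp
  show "(norm (v (m-p)))^2 * (Qf L (m-p))^4 / (Qf L p)^3 \<le> Cm * ((Qf L (m-p))^3 * (norm (v (m-p)))^2)"
  proof (cases "p = 0")
    case True then show ?thesis using q by (simp add: Cm_def)
  next
    case False
    have t: "Qf L (m-p) \<le> Qf L m + Qf L p" using Qf_tri[of L "m-p" m] by simp
    show ?thesis unfolding Cm_def
      by (rule scal2) (use q Qf_ge[OF box False] t in \<open>auto simp: q_def\<close>)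
  qed
qed

lemma term_cs:
  "(\<lambda>p. norm (u p) * Kn L (m - p) * norm (v (m - p))) summable_on UNIV \<and>
   (infsum (\<lambda>p. norm (u p) * Kn L (m - p) * norm (v (m - p))) UNIV)^2
     \<le> infsum (\<lambda>p. (Qf L p)^3 * (norm (u p))^2) UNIV *
       infsum (\<lambda>p. (norm (v (m-p)))^2 * (Qf L (m-p))^4 / (Qf L p)^3) UNIV"
proof -
  define f where "f p = sqrt ((Qf L p)^3) * norm (u p)" for p
  define g where "g p = norm (v (m-p)) * (Qf L (m-p))^2 / sqrt ((Qf L p)^3)" for p
  have f0: "f p \<ge> 0" for p by (simp add: f_def)
  have g0: "g p \<ge> 0" for p by (simp add: g_def)
  have f2: "(f p)^2 = (Qf L p)^3 * (norm (u p))^2" for p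
    by (simp add: f_def power_mult_distrib)
  have g2: "(g p)^2 = (norm (v (m-p)))^2 * (Qf L (m-p))^4 / (Qf L p)^3" for p
    by (simp add: g_def power_mult_distrib power_divide flip: power_mult)
  have fg: "f p * g p = norm (u p) * Kn L (m - p) * norm (v (m - p))" for p
  proof (cases "p = 0")
    case True then show ?thesis using u by (simp add: f_def g_def inC_def)
  next
    case False
    then have "sqrt ((Qf L p)^3) > 0" using Qf_pos[OF box False] by simp
    then show ?thesis by (simp add: f_def g_def Kn_Qf)
  qed
  have fs: "(\<lambda>p. (f p)^2) summable_on UNIV" using u by (simp add: f2 inC_def)
  have gs: "(\<lambda>p. (g p)^2) summable_on UNIV" unfolding g2 by (rule B_summable)
  from cs_infsum[OF f0 g0 fs gs] show ?thesis by (simp add: fg f2 g2)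
qed

lemma sum_B_bound:
  assumes M: "finite M"
  shows "(\<Sum>m\<in>M. infsum (\<lambda>p. (norm (v (m-p)))^2 * (Qf L (m-p))^4 / (Qf L p)^3) UNIV / (Qf L m)^5)
    \<le> 4 * infsum (\<lambda>m. 1 / (Qf L m)^7) UNIV * infsum (\<lambda>q. (Qf L q)^3 * (norm (v q))^2) UNIV"
proof -
  define Z where "Z = infsum (\<lambda>m. 1 / (Qf L m)^7) UNIV"
  have Zs: "(\<lambda>m. 1 / (Qf L m)^7) summable_on UNIV" by (rule lattice_Q[OF box dim3])
  have vs: "(\<lambda>x. (Qf L x)^3 * (norm (v x))^2) summable_on UNIV" using v by (simp add: inC_def)
  define H where "H m q = (norm (v q))^2 * (Qf L q)^4 / (Qf L (m-q))^3 / (Qf L m)^5" for m q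
  define h where "h m q = (norm (v q))^2 * (Qf L q)^4 / (Qf L (m - q))^3" for m q
  have hs: "h m summable_on UNIV" for m
    unfolding h_def using summable_shift[OF B_summable[of m], of m] by simp
  have HH: "H m = (\<lambda>q. h m q * (1 / (Qf L m)^5))" for m
    by (simp add: H_def h_def fun_eq_iff)
  have Hs: "H m summable_on UNIV" for m
    unfolding HH by (rule summable_on_cmult_left[OF hs])
  have Beq: "infsum (\<lambda>p. (norm (v (m-p)))^2 * (Qf L (m-p))^4 / (Qf L p)^3) UNIV / (Qf L m)^5 = infsum (H m) UNIV" for m
  proof -
    have "infsum (\<lambda>p. (norm (v (m-p)))^2 * (Qf L (m-p))^4 / (Qf L p)^3) UNIV = infsum (h m) UNIV"
      unfolding h_def using infsum_shift[of "\<lambda>q. (norm (v q))^2 * (Qf L q)^4 / (Qf L (m - q))^3" m] by simp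
    moreover have "infsum (H m) UNIV = infsum (h m) UNIV * (1 / (Qf L m)^5)"
      unfolding HH by (rule infsum_cmult_left) (rule hs)
    ultimately show ?thesis by simp
  qed
  have pw: "(\<Sum>m\<in>M. H m q) \<le> (4 * Z) * ((Qf L q)^3 * (norm (v q))^2)" for q
  proof (cases "q = 0")
    case True then show ?thesis using v by (simp add: H_def inC_def)
  next
    case False
    have "(\<Sum>m\<in>M. H m q) = ((Qf L q)^3 * (norm (v q))^2) * (\<Sum>m\<in>M. Qf L q / ((Qf L (m-q))^3 * (Qf L m)^5))"
    proof -
      have q4: "(Qf L q)^4 = Qf L q * (Qf L q)^3" by (simp add: eval_nat_numeral)
      show ?thesis unfolding sum_distrib_left
        by (rule sum.cong) (simp_all add: H_def q4 field_simps)
    qed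
    also have "\<dots> \<le> ((Qf L q)^3 * (norm (v q))^2) * (4 * Z)"
    proof (rule mult_left_mono)
      have "(\<Sum>m\<in>M. Qf L q / ((Qf L (m-q))^3 * (Qf L m)^5)) \<le> (\<Sum>m\<in>M. 2 * (1 / (Qf L m)^7 + 1 / (Qf L (m-q))^7))"
      proof (rule sum_mono)
        fix m
        show "Qf L q / ((Qf L (m-q))^3 * (Qf L m)^5) \<le> 2 * (1 / (Qf L m)^7 + 1 / (Qf L (m-q))^7)"
        proof (cases "m = 0 \<or> m = q")
          case True then show ?thesis by auto
        next
          case False
          then have "m \<noteq> 0" "m - q \<noteq> 0" by auto
          then show ?thesis
            by (intro key_scalar Qf_pos[OF box] Qf_tri Qf_nonneg)
        qed
      qed
      also have "\<dots> = 2 * ((\<Sum>m\<in>M. 1 / (Qf L m)^7) + (\<Sum>m\<in>M. 1 / (Qf L (m-q))^7))"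
        by (simp add: sum.distrib sum_distrib_left)
      also have "\<dots> \<le> 2 * (Z + Z)"
      proof -
        have 1: "(\<Sum>m\<in>M. 1 / (Qf L m)^7) \<le> Z" unfolding Z_def
          by (rule finite_sum_le_infsum[OF Zs M]) auto
        have "(\<Sum>m\<in>M. 1 / (Qf L (m-q))^7) = (\<Sum>m\<in>(\<lambda>m. m - q) ` M. 1 / (Qf L m)^7)"
          by (subst sum.reindex) (auto simp: inj_on_def)
        also have "\<dots> \<le> Z" unfolding Z_def
          by (rule finite_sum_le_infsum[OF Zs]) (auto simp: M)
        finally show ?thesis using 1 by simp
      qed
      finally show "(\<Sum>m\<in>M. Qf L q / ((Qf L (m-q))^3 * (Qf L m)^5)) \<le> 4 * Z" by simp
    qed simp
    finally show ?thesis by (simp add: mult.commute)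
  qed
  have "(\<Sum>m\<in>M. infsum (\<lambda>p. (norm (v (m-p)))^2 * (Qf L (m-p))^4 / (Qf L p)^3) UNIV / (Qf L m)^5)
      = (\<Sum>m\<in>M. infsum (H m) UNIV)" by (simp add: Beq)
  also have "\<dots> = infsum (\<lambda>q. \<Sum>m\<in>M. H m q) UNIV"
    using infsum_finite_sum[OF M, of H UNIV] Hs by simp
  also have "\<dots> \<le> infsum (\<lambda>q. (4 * Z) * ((Qf L q)^3 * (norm (v q))^2)) UNIV"
  proof (rule infsum_mono)
    show "(\<lambda>q. \<Sum>m\<in>M. H m q) summable_on UNIV" using infsum_finite_sum[OF M, of H UNIV] Hs by simp
    show "(\<lambda>q. (4 * Z) * ((Qf L q)^3 * (norm (v q))^2)) summable_on UNIV"
      by (rule summable_on_cmult_right[OF vs])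
  qed (rule pw)
  also have "\<dots> = 4 * Z * infsum (\<lambda>q. (Qf L q)^3 * (norm (v q))^2) UNIV"
    by (rule infsum_cmult_right) (simp add: vs)
  finally show ?thesis unfolding Z_def .
qed

end

context
  fixes L :: "real^'d::finite" and u v :: "'d field"
  assumes box: "\<forall>j. L$j > 0" and dim3: "CARD('d) \<le> 3"
    and u: "inC L u" and v: "inC L v"
begin

lemma conv_bound:
  "norm (convec L u v m) \<le> infsum (\<lambda>p. norm (u p) * Kn L (m - p) * norm (v (m - p))) UNIV"
proof -
  define X where "X p = (\<Sum>j\<in>UNIV. u p $ j * (\<i> * complex_of_real (kvec L (m - p) $ j))) *s v (m - p)" for p
  have conv: "convec L u v m = infsum X UNIV" unfolding convec_def X_def by (rule refl)
  have nb: "norm (X p) \<le> norm (u p) * Kn L (m - p) * norm (v (m - p))" for p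
    unfolding X_def Kn_def by (rule conv_term_bound)
  have ts: "(\<lambda>p. norm (u p) * Kn L (m - p) * norm (v (m - p))) summable_on UNIV"
    using term_cs[OF box dim3 u v] by blast
  have as: "(\<lambda>p. norm (X p)) summable_on UNIV"
    by (rule summable_on_comparison_test[OF ts]) (auto simp: nb)
  have "norm (infsum X UNIV) \<le> infsum (\<lambda>p. norm (X p)) UNIV"
    by (rule norm_infsum_bound) (use as in simp)
  also have "\<dots> \<le> infsum (\<lambda>p. norm (u p) * Kn L (m - p) * norm (v (m - p))) UNIV"
    by (rule infsum_mono[OF as ts nb])
  finally show ?thesis unfolding conv .
qed

lemma g_inC:
  assumes a: "a > 0"
  shows "inC L (specop L (\<lambda>x. phi1 (a * x)) (Bop L u v))"
proof -
  define g where "g = specop L (\<lambda>x. phi1 (a * x)) (Bop L u v)"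
  define S where "S m = infsum (\<lambda>p. norm (u p) * Kn L (m - p) * norm (v (m - p))) UNIV" for m
  define A where "A = infsum (\<lambda>p. (Qf L p)^3 * (norm (u p))^2) UNIV"
  define B where "B m = infsum (\<lambda>p. (norm (v (m-p)))^2 * (Qf L (m-p))^4 / (Qf L p)^3) UNIV" for m
  have A0: "A \<ge> 0" unfolding A_def by (rule infsum_nonneg) auto
  have B0: "B m \<ge> 0" for m unfolding B_def by (rule infsum_nonneg) auto
  have S0: "S m \<ge> 0" for m unfolding S_def by (rule infsum_nonneg) auto
  have SAB: "(S m)^2 \<le> A * B m" for m
    using term_cs[OF box dim3 u v, of m] by (simp add: S_def A_def B_def)
  have g0: "g 0 = 0" by (simp add: g_def specop_def Bop_def leray_def)
  have gb: "(Qf L m)^3 * (norm (g m))^2 \<le> (4 * A / a^2) * (B m / (Qf L m)^5)" for m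
  proof (cases "m = 0")
    case True then show ?thesis using g0 by simp
  next
    case False
    define q where "q = Qf L m"
    have q: "q > 0" using Qf_pos[OF box False] by (simp add: q_def)
    have aq: "a * q^4 > 0" using a q by simp
    have n1: "norm (g m) = phi1 (a * q^4) * norm (leray L (convec L u v) m)"
      using phi1_nonneg[of "a * q^4"] aq
      by (simp add: g_def specop_def Bop_def stokes_Qf q_def)
    have n2: "norm (leray L (convec L u v) m) \<le> 2 * S m"
      using leray_bound[OF box, of "convec L u v" m] conv_bound[of m] by (simp add: S_def)
    have "norm (g m) \<le> (1 / (a * q^4)) * (2 * S m)"
      unfolding n1 using phi1_le_inv[OF aq] phi1_nonneg[of "a * q^4"] aq n2
      by (intro mult_mono) auto
    then have "(norm (g m))^2 \<le> ((1 / (a * q^4)) * (2 * S m))^2"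
      by (intro power_mono) auto
    then have "q^3 * (norm (g m))^2 \<le> q^3 * ((1 / (a * q^4)) * (2 * S m))^2"
      using q by (intro mult_left_mono) auto
    also have "\<dots> = (4 / a^2) * (S m)^2 / q^5"
    proof -
      have "q^8 = q^3 * q^5" by (simp flip: power_add)
      then show ?thesis using q a by (simp add: power_mult_distrib field_simps flip: power_mult)
    qed
    also have "\<dots> \<le> (4 / a^2) * (A * B m) / q^5"
      using SAB[of m] q a by (intro divide_right_mono mult_left_mono) auto
    also have "\<dots> = (4 * A / a^2) * (B m / q^5)" by simp
    finally show ?thesis by (simp add: q_def)
  qed
  have Bs: "(\<lambda>m. B m / (Qf L m)^5) summable_on UNIV"
  proof (rule nonneg_bdd_above_summable_on)
    show "\<And>m. m \<in> UNIV \<Longrightarrow> 0 \<le> B m / (Qf L m)^5" using B0 by simp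
    show "bdd_above (sum (\<lambda>m. B m / (Qf L m)^5) ` {F. F \<subseteq> UNIV \<and> finite F})"
      using sum_B_bound[OF box dim3 u v] by (intro bdd_aboveI2[where M="4 * infsum (\<lambda>m. 1 / (Qf L m)^7) UNIV * infsum (\<lambda>q. (Qf L q)^3 * (norm (v q))^2) UNIV"]) (auto simp: B_def)
  qed
  show ?thesis
    unfolding inC_def g_def[symmetric]
  proof
    show "g 0 = 0" by (rule g0)
    show "(\<lambda>m. (Qf L m)^3 * (norm (g m))^2) summable_on UNIV"
    proof (rule summable_on_comparison_test)
      show "(\<lambda>m. (4 * A / a^2) * (B m / (Qf L m)^5)) summable_on UNIV"
        by (rule summable_on_cmult_right[OF Bs])
    next
      fix m
      show "0 \<le> (Qf L m)^3 * (norm (g m))^2" by simp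
      show "(Qf L m)^3 * (norm (g m))^2 \<le> (4 * A / a^2) * (B m / (Qf L m)^5)" by (rule gb)
    qed
  qed
qed

end

lemma exp_mono_ratio:
  fixes s \<sigma> :: real
  assumes "0 < \<sigma>" "\<sigma> \<le> s"
  shows "(1 - exp (-s)) * \<sigma> \<le> (1 - exp (-\<sigma>)) * s"
proof -
  have s: "s > 0" using assms by linarith
  define t where "t = \<sigma> / s"
  have t0: "0 \<le> t" and t1: "t \<le> 1" using assms s by (auto simp: t_def)
  have "exp ((1 - t) *\<^sub>R 0 + t *\<^sub>R (-s)) \<le> (1 - t) * exp 0 + t * exp (-s)"
    by (rule convex_onD[OF exp_convex t0 t1]) auto
  moreover have "(1 - t) *\<^sub>R 0 + t *\<^sub>R (-s) = -\<sigma>" using s by (simp add: t_def)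
  ultimately have "exp (-\<sigma>) \<le> (1 - t) + t * exp (-s)" by simp
  then have "t * (1 - exp (-s)) \<le> 1 - exp (-\<sigma>)" by (simp add: algebra_simps)
  then have "s * (t * (1 - exp (-s))) \<le> s * (1 - exp (-\<sigma>))" using s by (intro mult_left_mono) auto
  moreover have "s * (t * (1 - exp (-s))) = (1 - exp (-s)) * \<sigma>" using s by (simp add: t_def)
  ultimately show ?thesis by (simp add: mult.commute)
qed

lemma convex_sq:
  fixes p A B :: real
  assumes "0 \<le> p" "p \<le> 1"
  shows "(p * A + (1 - p) * B)^2 \<le> p * A^2 + (1 - p) * B^2"
proof -
  have "p * A^2 + (1 - p) * B^2 - (p * A + (1 - p) * B)^2 = p * (1 - p) * (A - B)^2"
    by (simp add: power2_eq_square algebra_simps)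
  moreover have "0 \<le> p * (1 - p) * (A - B)^2" using assms by simp
  ultimately show ?thesis by linarith
qed

lemma inC_phi0:
  assumes "inC L u" "b \<ge> 0"
  shows "inC L (specop L (\<lambda>x. phi0 (b * x)) u)"
proof (rule inC_mono[OF assms(1), where C=1])
  fix m
  have "stokes_eig L m \<ge> 0" by (simp add: stokes_eig_def)
  then have "exp (- (b * stokes_eig L m)) \<le> 1" using assms(2) by simp
  then show "norm (specop L (\<lambda>x. phi0 (b * x)) u m) \<le> 1 * norm (u m)"
    using mult_left_le_one_le[of "norm (u m)" "exp (- (b * stokes_eig L m))"]
    by (simp add: specop_def phi0_def)
qed

lemma inC_phi1F:
  assumes box: "\<forall>j. L$j > 0" and b: "b > 0" and F: "l2f F" "F 0 = 0"
  shows "inC L (specop L (\<lambda>x. phi1 (b * x)) F)"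
  unfolding inC_def
proof
  show "specop L (\<lambda>x. phi1 (b * x)) F 0 = 0" using F by (simp add: specop_def)
  show "(\<lambda>m. (Qf L m)^3 * (norm (specop L (\<lambda>x. phi1 (b * x)) F m))^2) summable_on UNIV"
  proof (rule summable_on_comparison_test)
    show "(\<lambda>m. (1 + 1 / b) * (norm (F m))^2) summable_on UNIV"
      using F by (intro summable_on_cmult_right) (simp add: l2f_def)
    fix m
    show "0 \<le> (Qf L m)^3 * (norm (specop L (\<lambda>x. phi1 (b * x)) F m))^2" by simp
    show "(Qf L m)^3 * (norm (specop L (\<lambda>x. phi1 (b * x)) F m))^2 \<le> (1 + 1 / b) * (norm (F m))^2"
    proof (cases "m = 0")
      case True then show ?thesis using F by (simp add: specop_def)
    next
      case False
      define q where "q = Qf L m"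
      define f where "f = phi1 (b * q^4)"
      have q: "q > 0" using Qf_pos[OF box False] by (simp add: q_def)
      have bq: "b * q^4 > 0" using b q by simp
      have f0: "f \<ge> 0" and f1: "f \<le> 1" and fi: "f \<le> 1 / (b * q^4)"
        unfolding f_def using phi1_nonneg phi1_le_1 phi1_le_inv bq by auto
      have nrm: "norm (specop L (\<lambda>x. phi1 (b * x)) F m) = f * norm (F m)"
        using f0 by (simp add: specop_def f_def stokes_Qf q_def)
      have q3: "q^3 \<le> 1 + q^4"
      proof (cases "q \<le> 1")
        case True then have "q^3 \<le> 1" using q by (simp add: power_le_one)
        then show ?thesis by (smt (verit) zero_le_power q)
      next
        case False
        then have "q^3 \<le> q^4" by (intro power_increasing) auto
        then show ?thesis by simp
      qed
      have ff: "f^2 \<le> 1" using f0 f1 by (simp add: power_le_one)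
      have qf: "q^4 * f^2 \<le> 1 / b"
      proof -
        have "f^2 \<le> f" using f0 f1 mult_left_le_one_le[of f f] by (simp add: power2_eq_square)
        then have "q^4 * f^2 \<le> q^4 * (f * 1)" using q by (intro mult_left_mono) auto
        also have "\<dots> \<le> q^4 * (1 / (b * q^4))" using fi q by (intro mult_left_mono) auto
        also have "\<dots> = 1 / b" using q by simp
        finally show ?thesis .
      qed
      have "q^3 * f^2 \<le> (1 + q^4) * f^2" using q3 by (intro mult_right_mono) auto
      also have "\<dots> = f^2 + q^4 * f^2" by (simp add: algebra_simps)
      also have "\<dots> \<le> 1 + 1 / b" using ff qf by linarith
      finally have "q^3 * f^2 * (norm (F m))^2 \<le> (1 + 1 / b) * (norm (F m))^2"
        by (intro mult_right_mono) auto
      then show ?thesis by (simp add: nrm power_mult_distrib q_def mult.assoc)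
    qed
  qed
qed

lemma init_inC:
  assumes box: "\<forall>j. L$j > 0" and al: "\<alpha> \<ge> 3/4" and w: "in_Hdot \<alpha> L w"
  shows "inC L w"
  unfolding inC_def
proof
  show "w 0 = 0" using w by (simp add: in_Hdot_def)
  define q0 where "q0 = sqrt (kap0 L)"
  have q0: "q0 > 0" using q0_pos[OF box] by (simp add: q0_def)
  define C where "C = q0 powr (3 - 4 * \<alpha>)"
  show "(\<lambda>m. (Qf L m)^3 * (norm (w m))^2) summable_on UNIV"
  proof (rule summable_on_comparison_test)
    show "(\<lambda>m. C * (stokes_eig L m powr \<alpha> * (norm (w m))^2)) summable_on UNIV"
      using w by (intro summable_on_cmult_right) (simp add: in_Hdot_def)
    fix m
    show "0 \<le> (Qf L m)^3 * (norm (w m))^2" by simp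
    show "(Qf L m)^3 * (norm (w m))^2 \<le> C * (stokes_eig L m powr \<alpha> * (norm (w m))^2)"
    proof (cases "m = 0")
      case True then show ?thesis using w by (simp add: in_Hdot_def)
    next
      case False
      define q where "q = Qf L m"
      have q: "q > 0" using Qf_pos[OF box False] by (simp add: q_def)
      have qq: "q0 \<le> q" using Qf_ge[OF box False] by (simp add: q_def q0_def)
      have st: "stokes_eig L m powr \<alpha> = q powr (4 * \<alpha>)"
      proof -
        have "stokes_eig L m = q powr 4" using q by (simp add: stokes_Qf q_def)
        then show ?thesis by (simp add: powr_powr)
      qed
      have "q powr (4 * \<alpha>) = q powr 3 * q powr (4 * \<alpha> - 3)" by (simp flip: powr_add)
      moreover have "q0 powr (4 * \<alpha> - 3) \<le> q powr (4 * \<alpha> - 3)"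
        using al q0 qq by (intro powr_mono2) auto
      ultimately have "q powr 3 * q0 powr (4 * \<alpha> - 3) \<le> q powr (4 * \<alpha>)"
        using q by (simp add: mult_left_mono)
      then have "q powr 3 \<le> C * q powr (4 * \<alpha>)"
        using q0 by (simp add: C_def powr_minus_divide powr_diff field_simps)
      then have "q^3 \<le> C * stokes_eig L m powr \<alpha>" using q st by simp
      then have "q^3 * (norm (w m))^2 \<le> C * stokes_eig L m powr \<alpha> * (norm (w m))^2"
        by (intro mult_right_mono) auto
      then show ?thesis by (simp add: q_def mult.assoc)
    qed
  qed
qed

definition ipm :: "'d::finite field \<Rightarrow> 'd field \<Rightarrow> int^'d \<Rightarrow> complex" where
  "ipm f v m = (\<Sum>j\<in>UNIV. f m $ j * cnj (v m $ j))"

lemma ipm_bound: "cmod (ipm f v m) \<le> norm (f m) * norm (v m)"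
proof -
  have "cmod (ipm f v m) \<le> (\<Sum>j\<in>UNIV. cmod (f m $ j * cnj (v m $ j)))"
    unfolding ipm_def by (rule norm_sum)
  also have "\<dots> = (\<Sum>j\<in>UNIV. \<bar>norm (f m $ j)\<bar> * \<bar>norm (v m $ j)\<bar>)" by (simp add: norm_mult)
  also have "\<dots> \<le> L2_set (\<lambda>j. norm (f m $ j)) UNIV * L2_set (\<lambda>j. norm (v m $ j)) UNIV"
    by (rule L2_set_mult_ineq)
  also have "\<dots> = norm (f m) * norm (v m)" by (simp add: norm_vec_def)
  finally show ?thesis .
qed

lemma norm_sq_vec: "(norm (x::complex^'d::finite))^2 = (\<Sum>j\<in>UNIV. (cmod (x $ j))^2)"
  by (simp add: norm_vec_def L2_set_def sum_nonneg)

lemma ipm_self: "ipm f f m = complex_of_real ((norm (f m))^2)"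
  unfolding ipm_def norm_sq_vec by (simp add: complex_norm_square[symmetric])

lemma l2f_ipm_summable:
  assumes f: "l2f f" and v: "l2f v"
  shows "ipm f v summable_on UNIV"
proof (rule abs_summable_summable)
  show "(\<lambda>m. norm (ipm f v m)) summable_on UNIV"
  proof (rule summable_on_comparison_test)
    show "(\<lambda>m. (norm (f m))^2 + (norm (v m))^2) summable_on UNIV"
      using f v unfolding l2f_def by (rule summable_on_add)
    fix m
    show "0 \<le> norm (ipm f v m)" by simp
    have "0 \<le> (norm (f m) - norm (v m))^2" by simp
    moreover have "(norm (f m) - norm (v m))^2 = (norm (f m))^2 + (norm (v m))^2 - 2 * (norm (f m) * norm (v m))"
      by (simp add: power2_eq_square algebra_simps)
    moreover have "0 \<le> norm (f m) * norm (v m)" by simp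
    ultimately show "norm (ipm f v m) \<le> (norm (f m))^2 + (norm (v m))^2"
      using ipm_bound[of f v m] by linarith
  qed
qed

lemma l2inner_eq:
  assumes f: "l2f f" and v: "l2f v"
  shows "l2inner L f v = vol L * infsum (\<lambda>m. Re (ipm f v m)) UNIV"
proof -
  have "l2inner L f v = Re (complex_of_real (vol L) * infsum (ipm f v) UNIV)"
    by (simp add: l2inner_def ipm_def[abs_def])
  also have "\<dots> = vol L * Re (infsum (ipm f v) UNIV)" by simp
  also have "Re (infsum (ipm f v) UNIV) = infsum (\<lambda>m. Re (ipm f v m)) UNIV"
    by (rule infsum_Re[symmetric]) (rule l2f_ipm_summable[OF f v])
  finally show ?thesis .
qed

lemma scaleR_cvec_nth: "(c *\<^sub>R (x::complex^'d::finite)) $ j = complex_of_real c * x $ j"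
  unfolding vector_scaleR_component by (rule scaleR_conv_of_real)

lemma ipm_lin: "ipm (\<lambda>m. W m - c *\<^sub>R G m) U m = ipm W U m - complex_of_real c * ipm G U m"
  unfolding ipm_def by (simp only: vector_minus_component scaleR_cvec_nth) (simp add: sum_subtractf sum_distrib_left algebra_simps)

lemma Re_ipm_le: "Re (ipm f v m) \<le> ((norm (f m))^2 + (norm (v m))^2) / 2"
proof -
  have "Re (ipm f v m) \<le> cmod (ipm f v m)" by (rule complex_Re_le_cmod)
  also have "\<dots> \<le> norm (f m) * norm (v m)" by (rule ipm_bound)
  also have "\<dots> \<le> ((norm (f m))^2 + (norm (v m))^2) / 2"
  proof -
    have "0 \<le> (norm (f m) - norm (v m))^2" by simp
    moreover have "(norm (f m) - norm (v m))^2 = (norm (f m))^2 + (norm (v m))^2 - 2 * (norm (f m) * norm (v m))"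
      by (simp add: power2_eq_square algebra_simps)
    ultimately have "2 * (norm (f m) * norm (v m)) \<le> (norm (f m))^2 + (norm (v m))^2" by linarith
    then show ?thesis by simp
  qed
  finally show ?thesis .
qed

lemma vol_pos: "\<forall>j. L$j > 0 \<Longrightarrow> vol L > 0"
  unfolding vol_def by (rule prod_pos) auto

lemma W_mode_bound:
  fixes uk Fs :: "'d::finite field"
  assumes box: "\<forall>j. L$j > 0" and nu: "\<nu> > 0" and tau: "\<tau> > 0"
    and th: "0 < \<theta>" "\<theta> \<le> \<nu> * lam" and lam: "lam > 0"
    and lamle: "\<And>m. m \<noteq> 0 \<Longrightarrow> lam \<le> stokes_eig L m"
    and uk0: "uk 0 = 0" and F0: "Fs 0 = 0"
  shows "(norm (specop L (\<lambda>x. phi0 (\<tau> * \<nu> * x)) uk m + \<tau> *\<^sub>R specop L (\<lambda>x. phi1 (\<tau> * \<nu> * x)) Fs m))^2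
    \<le> exp (-\<theta> * \<tau>) * (norm (uk m))^2 + (1 - exp (-\<theta> * \<tau>)) / (\<theta> * \<nu> * lam) * (norm (Fs m))^2"
proof (cases "m = 0")
  case True then show ?thesis using uk0 F0 by (simp add: specop_def)
next
  case False
  define l where "l = stokes_eig L m"
  have l: "lam \<le> l" using lamle[OF False] by (simp add: l_def)
  have l0: "l > 0" using l lam by linarith
  define s where "s = \<tau> * \<nu> * l"
  have s: "s > 0" using tau nu l0 by (simp add: s_def)
  define p where "p = exp (-s)"
  define q where "q = exp (-\<theta> * \<tau>)"
  have p0: "0 \<le> p" and p1: "p \<le> 1" using s by (auto simp: p_def)
  have tphi: "\<tau> * phi1 s = (1 - p) / (\<nu> * l)"
    using s tau nu l0 by (simp add: phi1_def p_def s_def field_simps)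
  define A where "A = norm (uk m)"
  define B where "B = norm (Fs m) / (\<nu> * l)"
  have "norm (specop L (\<lambda>x. phi0 (\<tau> * \<nu> * x)) uk m + \<tau> *\<^sub>R specop L (\<lambda>x. phi1 (\<tau> * \<nu> * x)) Fs m)
      = norm (p *\<^sub>R uk m + (\<tau> * phi1 s) *\<^sub>R Fs m)"
    by (simp add: specop_def phi0_def p_def s_def l_def)
  also have "\<dots> \<le> norm (p *\<^sub>R uk m) + norm ((\<tau> * phi1 s) *\<^sub>R Fs m)" by (rule norm_triangle_ineq)
  also have "\<dots> = p * A + (1 - p) * B"
    using p0 p1 nu l0 by (simp add: tphi A_def B_def)
  finally have n1: "norm (specop L (\<lambda>x. phi0 (\<tau> * \<nu> * x)) uk m + \<tau> *\<^sub>R specop L (\<lambda>x. phi1 (\<tau> * \<nu> * x)) Fs m)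
      \<le> p * A + (1 - p) * B" .
  have "(norm (specop L (\<lambda>x. phi0 (\<tau> * \<nu> * x)) uk m + \<tau> *\<^sub>R specop L (\<lambda>x. phi1 (\<tau> * \<nu> * x)) Fs m))^2
      \<le> (p * A + (1 - p) * B)^2" using n1 by (intro power_mono) auto
  also have "\<dots> \<le> p * A^2 + (1 - p) * B^2" by (rule convex_sq[OF p0 p1])
  also have "\<dots> \<le> q * A^2 + (1 - q) / (\<theta> * \<nu> * lam) * (norm (Fs m))^2"
  proof (rule add_mono)
    have nl: "\<nu> * lam \<le> \<nu> * l" using l nu by simp
    have "\<theta> \<le> \<nu> * l" using th nl by linarith
    then have "\<theta> * \<tau> \<le> s" using tau by (simp add: s_def)
    then have "p \<le> q" by (simp add: p_def q_def)
    then show "p * A^2 \<le> q * A^2" by (intro mult_right_mono) auto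
    have r: "(1 - p) * (\<theta> * \<tau>) \<le> (1 - q) * s"
      unfolding p_def q_def using exp_mono_ratio[of "\<theta> * \<tau>" s] th tau \<open>\<theta> * \<tau> \<le> s\<close> by simp
    then have r2: "(1 - p) * \<theta> \<le> (1 - q) * (\<nu> * l)"
      using tau by (simp add: s_def)
    have "(1 - p) * B^2 = ((1 - p) * \<theta>) / (\<theta> * (\<nu> * l)^2) * (norm (Fs m))^2"
      using th nu l0 by (simp add: B_def power_divide field_simps)
    also have "\<dots> \<le> ((1 - q) * (\<nu> * l)) / (\<theta> * (\<nu> * l)^2) * (norm (Fs m))^2"
      using r2 th nu l0 by (intro mult_right_mono divide_right_mono) auto
    also have "\<dots> = (1 - q) / (\<theta> * \<nu> * l) * (norm (Fs m))^2"
      using th nu l0 by (simp add: power2_eq_square field_simps)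
    also have "\<dots> \<le> (1 - q) / (\<theta> * \<nu> * lam) * (norm (Fs m))^2"
    proof (intro mult_right_mono divide_left_mono)
      show "0 \<le> 1 - q" using th tau by (simp add: q_def)
      show "\<theta> * \<nu> * lam \<le> \<theta> * \<nu> * l" using l th nu by simp
      show "0 < \<theta> * \<nu> * l * (\<theta> * \<nu> * lam)" using th nu l0 lam by simp
    qed simp
    finally show "(1 - p) * B^2 \<le> (1 - q) / (\<theta> * \<nu> * lam) * (norm (Fs m))^2" .
  qed
  finally show ?thesis by (simp add: q_def A_def)
qed


lemma amgm2:
  fixes x y :: real
  shows "x * y \<le> (x^2 + y^2) / 2"
proof -
  have "0 \<le> (x - y)^2" by simp
  then have "2 * (x * y) \<le> x^2 + y^2" by (simp add: power2_eq_square algebra_simps)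
  then show ?thesis by simp
qed

lemma lin_aux:
  fixes NU IW cG P1 P2 S1 S2 NW :: real
  assumes "NU = IW - cG" "cG = P1" "S1 - P1 = P2" "2 * P2 \<le> S1 + S2" "2 * IW \<le> NW + NU"
  shows "NU + S1 \<le> NW + S2"
  using assms by linarith

lemma infsum_diff_cmult:
  fixes f g :: "'a \<Rightarrow> real"
  assumes "f summable_on A" "g summable_on A"
  shows "infsum (\<lambda>x. f x - c * g x) A = infsum f A - c * infsum g A"
proof -
  have gs: "(\<lambda>x. (-c) * g x) summable_on A" by (rule summable_on_cmult_right[OF assms(2)])
  have "infsum (\<lambda>x. f x + (-c) * g x) A = infsum f A + infsum (\<lambda>x. (-c) * g x) A"
    by (rule infsum_add[OF assms(1) gs])
  also have "infsum (\<lambda>x. (-c) * g x) A = (-c) * infsum g A"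
    by (rule infsum_cmult_right) (use assms(2) in simp)
  finally show ?thesis by simp
qed

lemma energy_step:
  fixes uk U g Fs :: "'d::finite field"
  assumes box: "\<forall>j. L$j > 0" and nu: "\<nu> > 0" and tau: "\<tau> > 0" and gam: "\<gamma> > 0"
    and th1: "0 < \<theta>" and th2: "\<theta> \<le> \<nu> * lam" and th3: "\<theta> \<le> \<gamma>" and lam: "lam > 0"
    and lamle: "\<And>m. m \<noteq> 0 \<Longrightarrow> lam \<le> stokes_eig L m"
    and uk0: "uk 0 = 0" and F0: "Fs 0 = 0"
    and ukl: "l2f uk" and Fl: "l2f Fs" and FM: "l2norm_sq L Fs \<le> M^2"
    and Ul: "l2f U" and gl: "l2f g"
    and Ueq: "U = (\<lambda>m. specop L (\<lambda>x. phi0 (\<tau> * \<nu> * x)) uk m - (\<tau> * (1 - a^2)) *\<^sub>R g m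
                     + \<tau> *\<^sub>R specop L (\<lambda>x. phi1 (\<tau> * \<nu> * x)) Fs m)"
    and req: "a = phi0 (\<tau> * \<gamma>) * b + \<tau> * (1 - a) * l2inner L g U"
  shows "l2norm_sq L U + \<bar>a + 1\<bar>^2 \<le> exp (-\<theta> * \<tau>) * (l2norm_sq L uk + \<bar>b + 1\<bar>^2)
            + (1 - exp (-\<theta> * \<tau>)) * ((1 / \<theta>) * ((1 / (\<nu> * lam)) * M^2 + \<gamma>))"
proof -
  define W where "W m = specop L (\<lambda>x. phi0 (\<tau> * \<nu> * x)) uk m + \<tau> *\<^sub>R specop L (\<lambda>x. phi1 (\<tau> * \<nu> * x)) Fs m" for m
  define c where "c = \<tau> * (1 - a^2)"
  define q where "q = exp (-\<theta> * \<tau>)"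
  define K1 where "K1 = (1 - q) / (\<theta> * \<nu> * lam)"
  define e where "e = phi0 (\<tau> * \<gamma>)"
  have q1: "q \<le> 1" using th1 tau by (simp add: q_def)
  have K10: "K1 \<ge> 0" using q1 th1 nu lam by (simp add: K1_def)
  have UW: "U = (\<lambda>m. W m - c *\<^sub>R g m)" unfolding Ueq W_def c_def by (simp add: fun_eq_iff algebra_simps)
  have Wb: "(norm (W m))^2 \<le> q * (norm (uk m))^2 + K1 * (norm (Fs m))^2" for m
    unfolding W_def q_def K1_def by (rule W_mode_bound[where L=L and \<nu>=\<nu> and \<tau>=\<tau> and \<theta>=\<theta> and lam=lam and uk=uk and Fs=Fs, OF box nu tau th1 th2 lam lamle uk0 F0])
  have uks: "(\<lambda>m. (norm (uk m))^2) summable_on UNIV" using ukl by (simp add: l2f_def)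
  have Fss: "(\<lambda>m. (norm (Fs m))^2) summable_on UNIV" using Fl by (simp add: l2f_def)
  have Us: "(\<lambda>m. (norm (U m))^2) summable_on UNIV" using Ul by (simp add: l2f_def)
  have bs: "(\<lambda>m. q * (norm (uk m))^2 + K1 * (norm (Fs m))^2) summable_on UNIV"
    by (intro summable_on_add summable_on_cmult_right uks Fss)
  have Ws: "(\<lambda>m. (norm (W m))^2) summable_on UNIV"
    by (rule summable_on_comparison_test[OF bs]) (auto simp: Wb)
  have Wl: "l2f W" using Ws by (simp add: l2f_def)
  have vp: "vol L > 0" by (rule vol_pos[OF box])
  define NW where "NW = l2norm_sq L W"
  define NU where "NU = l2norm_sq L U"
  have NWb: "NW \<le> q * l2norm_sq L uk + K1 * M^2"
  proof -
    have "infsum (\<lambda>m. (norm (W m))^2) UNIV \<le> infsum (\<lambda>m. q * (norm (uk m))^2 + K1 * (norm (Fs m))^2) UNIV"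
      by (rule infsum_mono[OF Ws bs Wb])
    also have "\<dots> = q * infsum (\<lambda>m. (norm (uk m))^2) UNIV + K1 * infsum (\<lambda>m. (norm (Fs m))^2) UNIV"
      by (simp add: infsum_add summable_on_cmult_right uks Fss infsum_cmult_right)
    finally have "vol L * infsum (\<lambda>m. (norm (W m))^2) UNIV \<le> vol L * (q * infsum (\<lambda>m. (norm (uk m))^2) UNIV + K1 * infsum (\<lambda>m. (norm (Fs m))^2) UNIV)"
      using vp by (intro mult_left_mono) auto
    then have "NW \<le> q * l2norm_sq L uk + K1 * l2norm_sq L Fs"
      by (simp add: NW_def l2norm_sq_def algebra_simps)
    also have "\<dots> \<le> q * l2norm_sq L uk + K1 * M^2" using FM K10 by (simp add: mult_left_mono)
    finally show ?thesis .
  qed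
  define G where "G = l2inner L g U"
  define IW where "IW = l2inner L W U"
  have ident: "NU = IW - c * G"
  proof -
    have "(\<lambda>m. (norm (U m))^2) = (\<lambda>m. Re (ipm U U m))" by (simp add: ipm_self)
    also have "\<dots> = (\<lambda>m. Re (ipm W U m) - c * Re (ipm g U m))"
    proof
      fix m
      have "ipm U U m = ipm (\<lambda>m. W m - c *\<^sub>R g m) U m" using UW by simp
      then show "Re (ipm U U m) = Re (ipm W U m) - c * Re (ipm g U m)" by (simp add: ipm_lin)
    qed
    finally have eq: "infsum (\<lambda>m. (norm (U m))^2) UNIV = infsum (\<lambda>m. Re (ipm W U m)) UNIV - c * infsum (\<lambda>m. Re (ipm g U m)) UNIV"
      by (simp add: infsum_diff_cmult summable_on_Re l2f_ipm_summable Wl gl Ul)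
    have "NU = vol L * (infsum (\<lambda>m. Re (ipm W U m)) UNIV - c * infsum (\<lambda>m. Re (ipm g U m)) UNIV)"
      unfolding NU_def l2norm_sq_def eq ..
    also have "\<dots> = vol L * infsum (\<lambda>m. Re (ipm W U m)) UNIV - c * (vol L * infsum (\<lambda>m. Re (ipm g U m)) UNIV)"
      by (simp add: algebra_simps)
    also have "\<dots> = IW - c * G" by (simp add: IW_def G_def l2inner_eq Wl gl Ul)
    finally show ?thesis .
  qed
  have cross: "2 * IW \<le> NW + NU"
  proof -
    have Rs: "(\<lambda>m. Re (ipm W U m)) summable_on UNIV" by (intro summable_on_Re l2f_ipm_summable Wl Ul)
    have "infsum (\<lambda>m. 2 * Re (ipm W U m)) UNIV \<le> infsum (\<lambda>m. (norm (W m))^2 + (norm (U m))^2) UNIV"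
    proof (rule infsum_mono)
      show "(\<lambda>m. 2 * Re (ipm W U m)) summable_on UNIV" by (intro summable_on_cmult_right Rs)
      show "(\<lambda>m. (norm (W m))^2 + (norm (U m))^2) summable_on UNIV"
        by (intro summable_on_add Ws Us)
      fix m show "2 * Re (ipm W U m) \<le> (norm (W m))^2 + (norm (U m))^2"
        using Re_ipm_le[of W U m] by simp
    qed
    moreover have "infsum (\<lambda>m. 2 * Re (ipm W U m)) UNIV = 2 * infsum (\<lambda>m. Re (ipm W U m)) UNIV"
      by (rule infsum_cmult_right) (rule Rs)
    moreover have "infsum (\<lambda>m. (norm (W m))^2 + (norm (U m))^2) UNIV = infsum (\<lambda>m. (norm (W m))^2) UNIV + infsum (\<lambda>m. (norm (U m))^2) UNIV"
      by (rule infsum_add[OF Ws Us])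
    ultimately have "2 * infsum (\<lambda>m. Re (ipm W U m)) UNIV \<le> infsum (\<lambda>m. (norm (W m))^2) UNIV + infsum (\<lambda>m. (norm (U m))^2) UNIV"
      by simp
    then have "vol L * (2 * infsum (\<lambda>m. Re (ipm W U m)) UNIV) \<le> vol L * (infsum (\<lambda>m. (norm (W m))^2) UNIV + infsum (\<lambda>m. (norm (U m))^2) UNIV)"
      using vp by (intro mult_left_mono) auto
    then show "2 * IW \<le> NW + NU"
      by (simp add: IW_def NW_def NU_def l2norm_sq_def l2inner_eq Wl Ul algebra_simps)
  qed
  have eb: "\<tau> * (1 - a) * G = a - e * b" using req by (simp add: G_def e_def)
  have cG: "c * G = (1 + a) * (a - e * b)"
  proof -
    have "c * G = (1 + a) * (\<tau> * (1 - a) * G)" by (simp add: c_def power2_eq_square algebra_simps)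
    then show ?thesis using eb by simp
  qed
  have E2: "(1 + a)^2 - (1 + a) * (a - e * b) = (1 + a) * (1 + e * b)"
    by (simp add: power2_eq_square algebra_simps)
  have E3: "2 * ((1 + a) * (1 + e * b)) \<le> (1 + a)^2 + (1 + e * b)^2"
    using amgm2[of "1 + a" "1 + e * b"] by simp
  have main1: "NU + (1 + a)^2 \<le> NW + (1 + e * b)^2"
    by (rule lin_aux[OF ident cG E2 E3 cross])
  have rb: "(1 + e * b)^2 \<le> q * (1 + b)^2 + (1 - q) * (\<gamma> / \<theta>)"
  proof -
    have e0: "0 \<le> e" and e1: "e \<le> 1" using tau gam by (auto simp: e_def phi0_def)
    have "(1 + e * b)^2 = (e * (1 + b) + (1 - e) * 1)^2" by (simp add: algebra_simps)
    also have "\<dots> \<le> e * (1 + b)^2 + (1 - e) * 1^2" by (rule convex_sq[OF e0 e1])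
    also have "\<dots> \<le> q * (1 + b)^2 + (1 - q) * (\<gamma> / \<theta>)"
    proof (rule add_mono)
      have "\<theta> * \<tau> \<le> \<tau> * \<gamma>" using th3 tau by (simp add: mult.commute mult_left_mono)
      then have "e \<le> q" by (simp add: e_def q_def phi0_def)
      then show "e * (1 + b)^2 \<le> q * (1 + b)^2" by (intro mult_right_mono) auto
      have "(1 - exp (-(\<tau> * \<gamma>))) * (\<theta> * \<tau>) \<le> (1 - exp (-(\<theta> * \<tau>))) * (\<tau> * \<gamma>)"
        by (rule exp_mono_ratio) (use th1 tau \<open>\<theta> * \<tau> \<le> \<tau> * \<gamma>\<close> in auto)
      then have "(1 - e) * \<theta> \<le> (1 - q) * \<gamma>"
        using tau by (simp add: e_def q_def phi0_def)
      then show "(1 - e) * 1^2 \<le> (1 - q) * (\<gamma> / \<theta>)"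
        using th1 by (simp add: field_simps)
    qed
    finally show ?thesis .
  qed
  have "NU + \<bar>a + 1\<bar>^2 = NU + (1 + a)^2" by (simp add: add.commute)
  also have "\<dots> \<le> q * l2norm_sq L uk + K1 * M^2 + q * (1 + b)^2 + (1 - q) * (\<gamma> / \<theta>)"
    using main1 NWb rb by linarith
  also have "\<dots> = q * (l2norm_sq L uk + \<bar>b + 1\<bar>^2) + (1 - q) * ((1 / \<theta>) * ((1 / (\<nu> * lam)) * M^2 + \<gamma>))"
    using th1 nu lam by (simp add: K1_def add.commute field_simps)
  finally show ?thesis by (simp add: NU_def q_def)
qed

theorem theorem1:
  fixes L :: "real^'d::finite"
    and \<nu> \<gamma> \<alpha> :: real
    and F :: "real \<Rightarrow> 'd field"
    and t :: "nat \<Rightarrow> real"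
    and u :: "nat \<Rightarrow> 'd field"
    and r :: "nat \<Rightarrow> real"
    and n :: nat
  defines "\<theta> \<equiv> min (\<nu> * lambda1 L) \<gamma>"
  assumes dim: "CARD('d) = 2 \<or> CARD('d) = 3"
    and box: "\<forall>j. L $ j > 0"
    and nu: "\<nu> > 0" and gam: "\<gamma> > 0"
    and FH: "\<forall>s\<ge>0. in_H L (F s)"
    and Fbdd: "bdd_above ((\<lambda>s. sqrt (l2norm_sq L (F s))) ` {0..})"
    and t0: "t 0 = 0"
    and tpos: "\<forall>k\<ge>1. t k - t (k - 1) > 0"
    and alpha: "\<alpha> \<ge> 3/4"
    and init: "\<forall>i\<le>1. in_H L (u i) \<and> in_Hdot \<alpha> L (u i)"
    and scheme: "\<forall>k\<ge>1.
       let \<tau>k = t k - t (k - 1); \<tau> = t (k + 1) - t k;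
           ut = (\<lambda>m. ((\<tau> + 2 * \<tau>k) / (2 * \<tau>k)) *\<^sub>R u k m - (\<tau> / (2 * \<tau>k)) *\<^sub>R u (k - 1) m);
           g = specop L (\<lambda>x. phi1 (\<tau> * \<nu> * x)) (Bop L ut ut)
       in u (k + 1) = (\<lambda>m. specop L (\<lambda>x. phi0 (\<tau> * \<nu> * x)) (u k) m
                            - (\<tau> * (1 - (r (k + 1))\<^sup>2)) *\<^sub>R g m
                            + \<tau> *\<^sub>R specop L (\<lambda>x. phi1 (\<tau> * \<nu> * x)) (F (t k + \<tau> / 2)) m)
        \<and> r (k + 1) = phi0 (\<tau> * \<gamma>) * r k + \<tau> * (1 - r (k + 1)) * l2inner L g (u (k + 1))"
    and n1: "n \<ge> 1"
  shows "l2norm_sq L (u (n + 1)) + \<bar>r (n + 1) + 1\<bar>\<^sup>2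
    \<le> exp (- \<theta> * (\<Sum>i=1..n. t (i + 1) - t i)) * (l2norm_sq L (u 1) + \<bar>r 1 + 1\<bar>\<^sup>2)
       + (1 / \<theta>) * ((1 / (\<nu> * lambda1 L)) * (Linf_norm L F)\<^sup>2 + \<gamma>)"
proof -
  have d3: "CARD('d) \<le> 3" using dim by auto
  have k0: "kap0 L > 0" by (rule kap0_pos[OF box])
  have ex0: "\<exists>m::int^'d. m \<noteq> 0" by (rule exI[of _ "vec 1"]) (simp add: vec_eq_iff)
  have lamge: "(kap0 L)^2 \<le> lambda1 L"
    unfolding lambda1_def
  proof (rule cInf_greatest)
    show "stokes_eig L ` (UNIV - {0}) \<noteq> {}" using ex0 by auto
    fix x assume "x \<in> stokes_eig L ` (UNIV - {0})"
    then obtain m where m: "m \<noteq> 0" "x = stokes_eig L m" by auto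
    have "kap0 L \<le> Kn L m" by (rule Kn_ge[OF box m(1)])
    then show "(kap0 L)^2 \<le> x" using k0 m(2) by (simp add: stokes_Kn power_mono)
  qed
  have "0 < (kap0 L)^2" using k0 by simp
  then have lam: "lambda1 L > 0" using lamge by linarith
  have lamle: "lambda1 L \<le> stokes_eig L m" if "m \<noteq> 0" for m
    unfolding lambda1_def
    by (rule cInf_lower) (use that in \<open>auto intro!: bdd_belowI[where m=0] simp: stokes_eig_def\<close>)
  have th1: "\<theta> > 0" using nu gam lam unfolding \<theta>_def by simp
  have th2: "\<theta> \<le> \<nu> * lambda1 L" unfolding \<theta>_def by simp
  have th3: "\<theta> \<le> \<gamma>" unfolding \<theta>_def by simp
  define dt where "dt k = t (k + 1) - t k" for k
  have dt: "dt k > 0" for k using tpos[rule_format, of "k + 1"] by (simp add: dt_def)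
  have tnn: "t k \<ge> 0" for k
  proof (induction k)
    case 0 then show ?case by (simp add: t0)
  next
    case (Suc k) then show ?case using dt[of k] by (simp add: dt_def)
  qed
  define M where "M = Linf_norm L F"
  have FM: "l2norm_sq L (F s) \<le> M^2" if s: "s \<ge> 0" for s
  proof -
    have "sqrt (l2norm_sq L (F s)) \<le> M"
      unfolding M_def Linf_norm_def by (rule cSUP_upper) (use s Fbdd in auto)
    moreover have "l2norm_sq L (F s) \<ge> 0"
      unfolding l2norm_sq_def using vol_pos[OF box] by (intro mult_nonneg_nonneg infsum_nonneg) auto
    ultimately show ?thesis
      by (metis real_sqrt_ge_zero real_sqrt_pow2 power_mono)
  qed
  have Fl: "l2f (F s) \<and> F s 0 = 0" if "s \<ge> 0" for s
    using FH that by (simp add: in_H_def l2f_def)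
  define ut where "ut k = (\<lambda>m. ((dt k + 2 * (t k - t (k - 1))) / (2 * (t k - t (k - 1)))) *\<^sub>R u k m
                              - (dt k / (2 * (t k - t (k - 1)))) *\<^sub>R u (k - 1) m)" for k
  define gg where "gg k = specop L (\<lambda>x. phi1 (dt k * \<nu> * x)) (Bop L (ut k) (ut k))" for k
  have sch: "u (k + 1) = (\<lambda>m. specop L (\<lambda>x. phi0 (dt k * \<nu> * x)) (u k) m
                            - (dt k * (1 - (r (k + 1))\<^sup>2)) *\<^sub>R gg k m
                            + dt k *\<^sub>R specop L (\<lambda>x. phi1 (dt k * \<nu> * x)) (F (t k + dt k / 2)) m)
        \<and> r (k + 1) = phi0 (dt k * \<gamma>) * r k + dt k * (1 - r (k + 1)) * l2inner L (gg k) (u (k + 1))"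
    if k1: "k \<ge> 1" for k
    using scheme[rule_format, OF k1] unfolding Let_def dt_def ut_def gg_def by assumption
  have Fpos: "t k + dt k / 2 \<ge> 0" for k using tnn[of k] dt[of k] by simp
  have inCall: "inC L (u k)" for k
  proof (induction k rule: less_induct)
    case (less k)
    show ?case
    proof (cases "k \<le> 1")
      case True then show ?thesis using init alpha by (intro init_inC[OF box]) auto
    next
      case False
      then obtain j where kj: "k = j + 1" and j1: "j \<ge> 1" by (metis add.commute le_add_diff_inverse2 nat_le_linear not_le_imp_less less_imp_le_nat Suc_leI add_diff_cancel_left' plus_1_eq_Suc)
      have IHj: "inC L (u j)" and IHj1: "inC L (u (j - 1))" using less kj by auto
      have utC: "inC L (ut j)"
        unfolding ut_def by (intro inC_diff inC_scaleR IHj IHj1)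
      have gC: "inC L (gg j)"
        unfolding gg_def by (rule g_inC[OF box d3 utC utC]) (use dt[of j] nu in simp)
      have p0C: "inC L (specop L (\<lambda>x. phi0 (dt j * \<nu> * x)) (u j))"
        by (rule inC_phi0[OF IHj]) (use dt[of j] nu in simp)
      have p1C: "inC L (specop L (\<lambda>x. phi1 (dt j * \<nu> * x)) (F (t j + dt j / 2)))"
        using Fl[OF Fpos[of j]] by (intro inC_phi1F[OF box]) (use dt[of j] nu in auto)
      have "inC L (\<lambda>m. specop L (\<lambda>x. phi0 (dt j * \<nu> * x)) (u j) m
                            - (dt j * (1 - (r (j + 1))\<^sup>2)) *\<^sub>R gg j m
                            + dt j *\<^sub>R specop L (\<lambda>x. phi1 (dt j * \<nu> * x)) (F (t j + dt j / 2)) m)"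
        by (intro inC_add inC_diff inC_scaleR p0C gC p1C)
      then show ?thesis using sch[OF j1] kj by simp
    qed
  qed
  define K where "K = (1 / \<theta>) * ((1 / (\<nu> * lambda1 L)) * M^2 + \<gamma>)"
  define E where "E k = l2norm_sq L (u k) + \<bar>r k + 1\<bar>^2" for k
  have K0: "K \<ge> 0" using th1 nu lam gam by (simp add: K_def)
  have stepE: "E (k + 1) \<le> exp (-\<theta> * dt k) * E k + (1 - exp (-\<theta> * dt k)) * K" if k1: "k \<ge> 1" for k
  proof -
    have utC: "inC L (ut k)" unfolding ut_def by (intro inC_diff inC_scaleR inCall)
    have gC: "inC L (gg k)"
      unfolding gg_def by (rule g_inC[OF box d3 utC utC]) (use dt[of k] nu in simp)
    have uk0: "u k 0 = 0" using inCall[of k] by (simp add: inC_def)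
    show ?thesis
      unfolding E_def K_def
      by (rule energy_step[where L=L and \<nu>=\<nu> and \<tau>="dt k" and \<gamma>=\<gamma> and \<theta>=\<theta> and lam="lambda1 L"
            and uk="u k" and Fs="F (t k + dt k / 2)" and M=M and U="u (k + 1)" and g="gg k"
            and a="r (k + 1)" and b="r k",
            OF box nu dt gam th1 th2 th3 lam lamle uk0 conjunct2[OF Fl[OF Fpos]]
               inC_l2f[OF box inCall] conjunct1[OF Fl[OF Fpos]] FM[OF Fpos]
               inC_l2f[OF box inCall] inC_l2f[OF box gC] conjunct1[OF sch[OF k1]] conjunct2[OF sch[OF k1]]])
  qed
  have main: "E (n + 1) \<le> exp (-\<theta> * (\<Sum>i=1..n. t (i + 1) - t i)) * E 1
                + (1 - exp (-\<theta> * (\<Sum>i=1..n. t (i + 1) - t i))) * K" if n1: "n \<ge> 1" for n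
    using n1
  proof (induction n rule: dec_induct)
    case base
    show ?case using stepE[of 1] by (simp add: dt_def)
  next
    case (step n)
    define S where "S = (\<Sum>i=1..n. t (i + 1) - t i)"
    have S: "(\<Sum>i=1..Suc n. t (i + 1) - t i) = S + dt (n + 1)"
      using step.hyps by (simp add: S_def dt_def)
    have q0: "0 \<le> exp (-\<theta> * dt (n + 1))" by simp
    have "E (n + 1 + 1) \<le> exp (-\<theta> * dt (n + 1)) * E (n + 1) + (1 - exp (-\<theta> * dt (n + 1))) * K"
      by (rule stepE) (use step.hyps in simp)
    also have "\<dots> \<le> exp (-\<theta> * dt (n + 1)) * (exp (-\<theta> * S) * E 1 + (1 - exp (-\<theta> * S)) * K)
                    + (1 - exp (-\<theta> * dt (n + 1))) * K"
      using step.IH q0 by (simp add: S_def mult_left_mono)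
    also have "\<dots> = exp (-\<theta> * (S + dt (n + 1))) * E 1 + (1 - exp (-\<theta> * (S + dt (n + 1)))) * K"
      by (simp add: algebra_simps exp_add[symmetric])
    finally show ?case using S by simp
  qed
  have "E (n + 1) \<le> exp (-\<theta> * (\<Sum>i=1..n. t (i + 1) - t i)) * E 1 + K"
  proof -
    have "(1 - exp (-\<theta> * (\<Sum>i=1..n. t (i + 1) - t i))) * K \<le> 1 * K"
      using K0 by (intro mult_right_mono) auto
    then show ?thesis using main[OF n1] by simp
  qed
  then show ?thesis by (simp add: E_def K_def M_def)
qed

end
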